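(* Let $p\ge2$, $\theta\ge1$ and $r_0\ge0$, and write $\phi_p(t)=|t|^{p-2}t$. Let $h_0,h_0'\in\mathbb R$, with $h_0'=0$ if $r_0=0$. Then there exists a unique $\varphi\in C^1[r_0,+\infty)$ with $r^{\theta-1}\phi_p(\varphi')\in C^1[r_0,+\infty)$ solving \[ (r^{\theta-1}\phi_p(\varphi'))'+r^{\theta-1}\phi_p(\varphi)=0\ \ (r\ge r_0),\qquad \varphi(r_0)=h_0,\ \varphi'(r_0)=h_0'. \] *)

theory Defs
  imports "HOL-Analysis.Analysis"
begin

text \<open>phi_p(t) = |t|^(p-2) t.  (Isabelle's 0 powr a = 0 is harmless here, as the factor t vanishes.)\<close>
definition phi_p :: "real \<Rightarrow> real \<Rightarrow> real" where
  "phi_p p t = \<bar>t\<bar> powr (p - 2) * t"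

text \<open>The weight r^(theta-1) for r >= 0, with the convention r^0 = 1 (also at r = 0).\<close>
definition weight :: "real \<Rightarrow> real \<Rightarrow> real" where
  "weight \<theta> r = (if \<theta> = 1 then 1 else r powr (\<theta> - 1))"

definition C1_with_deriv :: "real set \<Rightarrow> (real \<Rightarrow> real) \<Rightarrow> (real \<Rightarrow> real) \<Rightarrow> bool" where
  "C1_with_deriv S f f' \<longleftrightarrow>
     (\<forall>x\<in>S. (f has_real_derivative f' x) (at x within S)) \<and> continuous_on S f'"

definition is_solution ::
  "real \<Rightarrow> real \<Rightarrow> real \<Rightarrow> real \<Rightarrow> real \<Rightarrow> (real \<Rightarrow> real) \<Rightarrow> bool" where
  "is_solution p \<theta> r0 h0 h0' \<phi> \<longleftrightarrow>
     (\<exists>\<phi>' g'.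
        C1_with_deriv {r0..} \<phi> \<phi>' \<and>
        C1_with_deriv {r0..} (\<lambda>r. weight \<theta> r * phi_p p (\<phi>' r)) g' \<and>
        (\<forall>r\<ge>r0. g' r + weight \<theta> r * phi_p p (\<phi> r) = 0) \<and>
        \<phi> r0 = h0 \<and> \<phi>' r0 = h0')"

end

theory Submission
  imports Defs
begin

definition psi :: "real \<Rightarrow> real \<Rightarrow> real" where
  "psi s t = sgn t * \<bar>t\<bar> powr s"

lemma psi_0[simp]: "psi s 0 = 0" by (simp add: psi_def)

lemma abs_psi: "\<bar>psi s t\<bar> = \<bar>t\<bar> powr s"
  by (simp add: psi_def abs_mult)

lemma psi_neg: "psi s (- t) = - psi s t"
  by (simp add: psi_def)

lemma psi_pos: "t > 0 \<Longrightarrow> psi s t = t powr s"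
  by (simp add: psi_def)

lemma psi_negv: "t < 0 \<Longrightarrow> psi s t = - ((-t) powr s)"
  by (simp add: psi_def)

lemma psi_mult_self_nonneg: "0 \<le> psi s t * t"
  by (cases "t > 0"; cases "t < 0") (auto simp: psi_def mult_nonneg_nonneg mult_nonneg_nonpos)

lemma psi_pos_iff: "psi s t > 0 \<longleftrightarrow> t > 0"
  by (cases "t > 0"; cases "t < 0") (auto simp: psi_def)

lemma psi_neg_iff: "psi s t < 0 \<longleftrightarrow> t < 0"
  by (cases "t > 0"; cases "t < 0") (auto simp: psi_def)

lemma phi_p_psi: "phi_p p t = psi (p - 1) t"
proof (cases "t = 0")
  case False
  have "\<bar>t\<bar> powr (p - 1) = \<bar>t\<bar> powr ((p - 2) + 1)" by simp
  also have "\<dots> = \<bar>t\<bar> powr (p - 2) * \<bar>t\<bar> powr 1" by (rule powr_add)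
  also have "\<dots> = \<bar>t\<bar> powr (p - 2) * \<bar>t\<bar>" using False by simp
  finally have "\<bar>t\<bar> powr (p - 1) = \<bar>t\<bar> powr (p - 2) * \<bar>t\<bar>" .
  then show ?thesis using False
    by (cases "t > 0") (auto simp: phi_p_def psi_def)
qed (simp add: phi_p_def)

lemma psi_inv: assumes "s > 0" shows "psi s (psi (1/s) y) = y"
proof -
  have "(\<bar>y\<bar> powr (1/s)) powr s = \<bar>y\<bar>"
    using assms by (simp add: powr_powr)
  then show ?thesis
    by (cases "y > 0"; cases "y < 0") (auto simp: psi_def abs_mult)
qed

lemma isCont_psi: assumes "s > 0" shows "isCont (psi s) x"
proof (cases "x = 0")
  case True
  have "((\<lambda>t. \<bar>t\<bar> powr s) \<longlongrightarrow> \<bar>0\<bar> powr s) (at 0)"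
    using assms by (intro tendsto_powr' tendsto_intros) auto
  then have l: "((\<lambda>t. \<bar>t\<bar> powr s) \<longlongrightarrow> 0) (at 0)" by simp
  have "eventually (\<lambda>t. norm (psi s t) \<le> \<bar>t\<bar> powr s) (at 0)"
    by (intro always_eventually allI) (simp add: abs_psi)
  then have "((\<lambda>t. psi s t) \<longlongrightarrow> 0) (at 0)"
    using l by (rule Lim_null_comparison)
  then show ?thesis using True by (simp add: isCont_def)
next
  case False
  have c1: "isCont (\<lambda>t. sgn t) x" using False by (intro isCont_sgn continuous_ident) auto
  have c2: "isCont (\<lambda>t. \<bar>t\<bar> powr s) x"
    unfolding isCont_def using False by (intro tendsto_powr' tendsto_intros) auto
  have "isCont (\<lambda>t. sgn t * \<bar>t\<bar> powr s) x"
    using c1 c2 by (rule isCont_mult)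
  then show ?thesis unfolding psi_def[abs_def] .
qed

lemma continuous_on_psi: "s > 0 \<Longrightarrow> continuous_on S (psi s)"
  by (simp add: continuous_at_imp_continuous_on isCont_psi)

lemma powr_mvt:
  fixes x y s :: real
  assumes "0 \<le> y" "y < x" and that: "s > 0"
  shows "\<exists>z. y < z \<and> z < x \<and> x powr s - y powr s = (x - y) * (s * z powr (s - 1))"
proof -
  have "continuous_on {y..x} (\<lambda>t. t powr s)"
    using assms that by (intro continuous_on_powr') (auto intro: continuous_intros)
  moreover have "(\<lambda>t. t powr s) differentiable (at t)" if "y < t" "t < x" for t
    using that assms has_real_derivative_powr[of t s] by (auto simp: real_differentiable_def)
  ultimately obtain l z where z: "y < z" "z < x" "DERIV (\<lambda>t. t powr s) z :> l"
     "x powr s - y powr s = (x - y) * l"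
    using MVT[OF assms(2)] by blast
  have "l = s * z powr (s - 1)"
    using DERIV_unique[OF z(3) has_real_derivative_powr[of z s]] z assms by auto
  then show ?thesis using z by auto
qed

lemma psi_nonneg_eq: "t \<ge> 0 \<Longrightarrow> psi s t = t powr s"
  by (cases "t = 0") (auto simp: psi_def)

lemma psi_nonpos_eq: "t \<le> 0 \<Longrightarrow> psi s t = - ((- t) powr s)"
  by (cases "t = 0") (auto simp: psi_def)

lemma powr_lip1:
  fixes x y s K :: real
  assumes "1 \<le> s" "0 \<le> y" "y \<le> x" "x \<le> K"
  shows "x powr s - y powr s \<le> s * K powr (s - 1) * (x - y)"
proof (cases "y = x")
  case False
  then have "y < x" using assms by auto
  then obtain z where z: "y < z" "z < x" "x powr s - y powr s = (x - y) * (s * z powr (s - 1))"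
    using powr_mvt[of y x s] assms by auto
  have "z powr (s - 1) \<le> K powr (s - 1)"
    using z assms by (intro powr_mono2) auto
  then have "(x - y) * (s * z powr (s - 1)) \<le> (x - y) * (s * K powr (s - 1))"
    using z assms by (intro mult_left_mono) auto
  then show ?thesis using z by (simp add: algebra_simps)
qed simp

lemma powr_lip2:
  fixes x y s m :: real
  assumes "0 < s" "s \<le> 1" "0 < m" "m \<le> y" "y \<le> x"
  shows "x powr s - y powr s \<le> s * m powr (s - 1) * (x - y)"
proof (cases "y = x")
  case False
  then have "y < x" using assms by auto
  then obtain z where z: "y < z" "z < x" "x powr s - y powr s = (x - y) * (s * z powr (s - 1))"
    using powr_mvt[of y x s] assms by auto
  have "z powr (s - 1) \<le> m powr (s - 1)"
    using z assms by (intro powr_mono2') auto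
  then have "(x - y) * (s * z powr (s - 1)) \<le> (x - y) * (s * m powr (s - 1))"
    using z assms by (intro mult_left_mono) auto
  then show ?thesis using z by (simp add: algebra_simps)
qed simp

lemma psi_lip_pos:
  assumes "1 \<le> s" "0 \<le> x" "0 \<le> y" "x \<le> K" "y \<le> K"
  shows "\<bar>psi s x - psi s y\<bar> \<le> s * K powr (s - 1) * \<bar>x - y\<bar>"
proof (cases "y \<le> x")
  case True
  have "y powr s \<le> x powr s" using True assms by (intro powr_mono2) auto
  then show ?thesis using powr_lip1[of s y x K] True assms
    by (simp add: psi_nonneg_eq)
next
  case False
  have "x powr s \<le> y powr s" using False assms by (intro powr_mono2) auto
  then show ?thesis using powr_lip1[of s x y K] False assms
    by (simp add: psi_nonneg_eq)
qed

lemma psi_lip1: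
  assumes "1 \<le> s" "\<bar>x\<bar> \<le> K" "\<bar>y\<bar> \<le> K"
  shows "\<bar>psi s x - psi s y\<bar> \<le> s * K powr (s - 1) * \<bar>x - y\<bar>"
proof -
  have K0: "0 \<le> K" using assms by auto
  have B: "t powr s \<le> s * K powr (s - 1) * t" if "0 \<le> t" "t \<le> K" for t
    using powr_lip1[of s 0 t K] that assms by simp
  consider "0 \<le> x" "0 \<le> y" | "x \<le> 0" "y \<le> 0" | "0 \<le> x" "y \<le> 0" | "x \<le> 0" "0 \<le> y"
    by linarith
  then show ?thesis
  proof cases
    case 1 then show ?thesis using psi_lip_pos[of s x y K] assms by auto
  next
    case 2
    have "\<bar>psi s (-x) - psi s (-y)\<bar> \<le> s * K powr (s - 1) * \<bar>(-x) - (-y)\<bar>"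
      using psi_lip_pos[of s "-x" "-y" K] assms 2 by auto
    then show ?thesis by (simp add: psi_neg abs_minus_commute)
  next
    case 3
    have "\<bar>psi s x - psi s y\<bar> = x powr s + (-y) powr s"
      using 3 by (simp add: psi_nonneg_eq psi_nonpos_eq)
    also have "\<dots> \<le> s * K powr (s - 1) * x + s * K powr (s - 1) * (-y)"
      using B[of x] B[of "-y"] 3 assms by (intro add_mono) auto
    also have "\<dots> = s * K powr (s - 1) * \<bar>x - y\<bar>" using 3 by (simp add: algebra_simps)
    finally show ?thesis .
  next
    case 4
    have "\<bar>psi s x - psi s y\<bar> = (-x) powr s + y powr s"
      using 4 by (simp add: psi_nonneg_eq psi_nonpos_eq) (smt (verit) powr_non_neg)
    also have "\<dots> \<le> s * K powr (s - 1) * (-x) + s * K powr (s - 1) * y"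
      using B[of "-x"] B[of y] 4 assms by (intro add_mono) auto
    also have "\<dots> = s * K powr (s - 1) * \<bar>x - y\<bar>" using 4 by (simp add: algebra_simps)
    finally show ?thesis .
  qed
qed

lemma psi_lip2_pos:
  assumes "0 < s" "s \<le> 1" "0 < m" "m \<le> x" "m \<le> y"
  shows "\<bar>psi s x - psi s y\<bar> \<le> s * m powr (s - 1) * \<bar>x - y\<bar>"
proof (cases "y \<le> x")
  case True
  have "y powr s \<le> x powr s" using True assms by (intro powr_mono2) auto
  then show ?thesis using powr_lip2[of s m y x] True assms
    by (simp add: psi_nonneg_eq)
next
  case False
  have "x powr s \<le> y powr s" using False assms by (intro powr_mono2) auto
  then show ?thesis using powr_lip2[of s m x y] False assms
    by (simp add: psi_nonneg_eq)
qed

lemma psi_lip2: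
  assumes "0 < s" "s \<le> 1" "0 < m" "(m \<le> x \<and> m \<le> y) \<or> (x \<le> -m \<and> y \<le> -m)"
  shows "\<bar>psi s x - psi s y\<bar> \<le> s * m powr (s - 1) * \<bar>x - y\<bar>"
  using assms(4)
proof
  assume "m \<le> x \<and> m \<le> y" then show ?thesis using psi_lip2_pos[of s m x y] assms by auto
next
  assume "x \<le> -m \<and> y \<le> -m"
  then have "\<bar>psi s (-x) - psi s (-y)\<bar> \<le> s * m powr (s - 1) * \<bar>(-x) - (-y)\<bar>"
    using psi_lip2_pos[of s m "-x" "-y"] assms by auto
  then show ?thesis by (simp add: psi_neg abs_minus_commute)
qed

lemma abs_powr_deriv:
  assumes "s > 1"
  shows "((\<lambda>x. \<bar>x\<bar> powr s) has_real_derivative s * psi (s - 1) x) (at x)"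
proof -
  consider "x > 0" | "x < 0" | "x = 0" by linarith
  then show ?thesis
  proof cases
    case 1
    have "((\<lambda>z. z powr s) has_real_derivative s * x powr (s - 1)) (at x)"
      using 1 by (rule has_real_derivative_powr)
    then have "((\<lambda>z. \<bar>z\<bar> powr s) has_real_derivative s * x powr (s - 1)) (at x)"
      by (rule has_field_derivative_transform_within_open[where S="{0<..}"]) (use 1 in auto)
    then show ?thesis using 1 by (simp add: psi_pos)
  next
    case 2
    have d: "DERIV (\<lambda>z. - z) x :> - 1" by (auto intro!: derivative_eq_intros)
    have "((\<lambda>z. (- z) powr s) has_real_derivative s * (- x) powr (s - of_nat 1) * (- 1)) (at x)"
      using DERIV_fun_powr[OF d] 2 by auto
    then have "((\<lambda>z. \<bar>z\<bar> powr s) has_real_derivative s * (- x) powr (s - of_nat 1) * (- 1)) (at x)"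
      by (rule has_field_derivative_transform_within_open[where S="{..<0}"]) (use 2 in auto)
    then show ?thesis using 2 by (simp add: psi_negv)
  next
    case 3
    have l: "((\<lambda>h. \<bar>h\<bar> powr (s - 1)) \<longlongrightarrow> 0) (at 0)"
    proof -
      have "((\<lambda>h. \<bar>h\<bar> powr (s - 1)) \<longlongrightarrow> \<bar>0\<bar> powr (s - 1)) (at 0)"
        using assms by (intro tendsto_powr' tendsto_intros) auto
      then show ?thesis by simp
    qed
    have "eventually (\<lambda>h. norm ((\<bar>0 + h\<bar> powr s - \<bar>0\<bar> powr s) / h) \<le> \<bar>h\<bar> powr (s - 1)) (at 0)"
    proof -
      have "norm ((\<bar>0 + h\<bar> powr s - \<bar>0\<bar> powr s) / h) \<le> \<bar>h\<bar> powr (s - 1)" if "h \<noteq> 0" for h :: real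
      proof -
        have "\<bar>h\<bar> powr (s - 1) = \<bar>h\<bar> powr s / \<bar>h\<bar> powr 1" by (rule powr_diff)
        then show ?thesis using that by (simp add: abs_divide)
      qed
      then show ?thesis unfolding eventually_at_filter by (intro always_eventually) auto
    qed
    then have "((\<lambda>h. (\<bar>0 + h\<bar> powr s - \<bar>0\<bar> powr s) / h) \<longlongrightarrow> 0) (at 0)"
      using l by (rule Lim_null_comparison)
    then have "DERIV (\<lambda>x. \<bar>x\<bar> powr s) 0 :> 0" unfolding DERIV_def by simp
    then show ?thesis using 3 by simp
  qed
qed

lemma DERIV_transform_on:
  "x \<in> S \<Longrightarrow> (\<And>y. y \<in> S \<Longrightarrow> g y = f y) \<Longrightarrow> (f has_field_derivative D) (at x within S)
   \<Longrightarrow> (g has_field_derivative D) (at x within S)"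
  unfolding has_field_derivative_def by (rule has_derivative_transform)

locale hl =
  fixes p \<theta> :: real
  assumes p2: "2 \<le> p" and th1: "1 \<le> \<theta>"
begin

definition "al = 1 / (p - 1)"
abbreviation "rho \<equiv> weight \<theta>"
abbreviation "ph \<equiv> phi_p p"
definition "pq y = psi al y"

lemma al_pos: "0 < al" and al_le1: "al \<le> 1"
  using p2 by (auto simp: al_def)

lemma ph_eq: "ph t = psi (p - 1) t" by (rule phi_p_psi)

lemma ph_pq[simp]: "ph (pq y) = y"
  using psi_inv[of "p - 1" y] p2 by (simp add: ph_eq pq_def al_def)

lemma pq_ph[simp]: "pq (ph x) = x"
  using psi_inv[of "1 / (p - 1)" x] p2 by (simp add: ph_eq pq_def al_def)

lemma ph_0[simp]: "ph 0 = 0" and pq_0[simp]: "pq 0 = 0"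
  by (simp_all add: ph_eq pq_def)

lemma isCont_ph: "isCont ph x"
  unfolding ph_eq[abs_def] using p2 by (intro isCont_psi) auto

lemma isCont_pq: "isCont pq x"
  unfolding pq_def[abs_def] using al_pos by (intro isCont_psi) auto

lemma abs_ph: "\<bar>ph t\<bar> = \<bar>t\<bar> powr (p - 1)" by (simp add: ph_eq abs_psi)
lemma abs_pq: "\<bar>pq t\<bar> = \<bar>t\<bar> powr al" by (simp add: pq_def abs_psi)

lemma ph_lip: "\<bar>x\<bar> \<le> K \<Longrightarrow> \<bar>y\<bar> \<le> K \<Longrightarrow> \<bar>ph x - ph y\<bar> \<le> (p - 1) * K powr (p - 2) * \<bar>x - y\<bar>"
  using psi_lip1[of "p - 1" x K y] p2 by (simp add: ph_eq)

lemma ph_bound: "\<bar>x\<bar> \<le> K \<Longrightarrow> \<bar>ph x\<bar> \<le> K powr (p - 1)"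
  using p2 by (simp add: abs_ph powr_mono2)

lemma pq_bound: "\<bar>pq y\<bar> \<le> 1 + \<bar>y\<bar>"
proof (cases "\<bar>y\<bar> \<le> 1")
  case True
  then have "\<bar>y\<bar> powr al \<le> 1" using al_pos by (intro powr_le1) auto
  then show ?thesis by (simp add: abs_pq)
next
  case False
  then have "\<bar>y\<bar> powr al \<le> \<bar>y\<bar> powr 1" using al_le1 by (intro powr_mono) auto
  then show ?thesis using False by (simp add: abs_pq)
qed

lemma pq_lip2:
  assumes "0 < m" "(m \<le> x \<and> m \<le> y) \<or> (x \<le> -m \<and> y \<le> -m)"
  shows "\<bar>pq x - pq y\<bar> \<le> al * m powr (al - 1) * \<bar>x - y\<bar>"
  using psi_lip2[of al m x y] assms al_pos al_le1 by (simp add: pq_def)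

lemma rho_def: "rho r = (if \<theta> = 1 then 1 else r powr (\<theta> - 1))"
  by (simp add: weight_def)

lemma rho_nonneg: "0 \<le> rho r" by (simp add: rho_def)

lemma rho_pos: "0 < r \<Longrightarrow> 0 < rho r" by (simp add: rho_def)

lemma rho_zero: "0 \<le> r \<Longrightarrow> rho r = 0 \<Longrightarrow> r = 0 \<and> 1 < \<theta>"
  using th1 by (auto simp: rho_def split: if_splits)

lemma rho_mono: "0 \<le> r \<Longrightarrow> r \<le> s \<Longrightarrow> rho r \<le> rho s"
  using th1 by (auto simp: rho_def intro: powr_mono2)

lemma weight1: "weight 1 = (\<lambda>_. 1)" by (auto simp: weight_def fun_eq_iff)

lemma rho_cont: "continuous_on {0..} rho"
proof (cases "\<theta> = 1")
  case True then show ?thesis by (simp add: weight1)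
next
  case False
  then have "continuous_on {0..} (\<lambda>r::real. r powr (\<theta> - 1))"
    using th1 by (intro continuous_on_powr') (auto intro: continuous_intros)
  then show ?thesis using False by (simp add: rho_def)
qed

lemma rho_cont_sub: "0 \<le> c \<Longrightarrow> continuous_on {c..d} rho"
  by (rule continuous_on_subset[OF rho_cont]) auto

lemma rho_deriv: "0 < r \<Longrightarrow> (rho has_real_derivative (\<theta> - 1) * r powr (\<theta> - 2)) (at r)"
proof (cases "\<theta> = 1")
  case True then show ?thesis by (simp add: weight1)
next
  case False
  assume r: "0 < r"
  have "((\<lambda>z. z powr (\<theta> - 1)) has_real_derivative (\<theta> - 1) * r powr (\<theta> - 1 - 1)) (at r)"
    using r by (rule has_real_derivative_powr)
  moreover have "rho = (\<lambda>z. z powr (\<theta> - 1))" using False by (auto simp: weight_def fun_eq_iff)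
  ultimately show ?thesis by simp
qed

lemma rho_pow: "0 \<le> r \<Longrightarrow> r powr \<theta> = r * rho r"
proof (cases "r = 0")
  case False
  assume "0 \<le> r"
  then have r: "0 < r" using False by auto
  have "r powr \<theta> = r powr (1 + (\<theta> - 1))" by simp
  also have "\<dots> = r powr 1 * r powr (\<theta> - 1)" by (rule powr_add)
  finally show ?thesis using r by (simp add: rho_def)
qed (use th1 in \<open>auto simp: rho_def\<close>)

lemma rho_integral:
  assumes "0 \<le> c" "c \<le> s"
  shows "(rho has_integral (s powr \<theta> / \<theta> - c powr \<theta> / \<theta>)) {c..s}"
proof -
  have "continuous_on {c..s} (\<lambda>r. r powr \<theta> / \<theta>)"
    using assms th1 by (intro continuous_intros continuous_on_powr') (auto intro: continuous_intros)
  moreover have "((\<lambda>r. r powr \<theta> / \<theta>) has_vector_derivative rho x) (at x)" if "x \<in> {c<..<s} - {}" for x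
  proof -
    have x: "0 < x" using that assms by auto
    have "((\<lambda>r. r powr \<theta>) has_real_derivative \<theta> * x powr (\<theta> - 1)) (at x)"
      using x by (rule has_real_derivative_powr)
    then have "((\<lambda>r. r powr \<theta> / \<theta>) has_real_derivative \<theta> * x powr (\<theta> - 1) / \<theta>) (at x)"
      by (rule DERIV_cdivide)
    moreover have "\<theta> * x powr (\<theta> - 1) / \<theta> = rho x" using x th1 by (simp add: rho_def)
    ultimately show ?thesis by (simp add: has_real_derivative_iff_has_vector_derivative)
  qed
  ultimately show ?thesis
    using fundamental_theorem_of_calculus_interior_strong[of "{}" c s "\<lambda>r. r powr \<theta> / \<theta>" rho] assms
    by auto
qed

lemma rho_int_lb:
  assumes "0 \<le> c" "c \<le> s"
  shows "(s - c) * rho s / \<theta> \<le> s powr \<theta> / \<theta> - c powr \<theta> / \<theta>"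
proof -
  have "c * rho c \<le> c * rho s" using assms by (intro mult_left_mono rho_mono) auto
  then have "(s - c) * rho s \<le> s * rho s - c * rho c" by (simp add: algebra_simps)
  then have "(s - c) * rho s / \<theta> \<le> (s * rho s - c * rho c) / \<theta>"
    using th1 by (intro divide_right_mono) auto
  also have "\<dots> = s powr \<theta> / \<theta> - c powr \<theta> / \<theta>"
    using assms by (simp add: rho_pow diff_divide_distrib)
  finally show ?thesis .
qed

lemma cont_div_rho:
  assumes c: "0 \<le> c" "c \<le> d" and M: "0 \<le> M"
    and N: "\<And>t. t \<in> {c..d} \<Longrightarrow> (N has_real_derivative N' t) (at t within {c..d})"
    and bnd: "\<And>t. t \<in> {c..d} \<Longrightarrow> \<bar>N' t\<bar> \<le> rho t * M"
    and N0: "rho c = 0 \<Longrightarrow> N c = 0"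
  shows "continuous_on {c..d} (\<lambda>s. N s / rho s)"
  unfolding continuous_on_eq_continuous_within
proof
  fix t assume t: "t \<in> {c..d}"
  have Nc: "continuous (at t within {c..d}) N" using N[OF t] by (rule DERIV_continuous)
  have rc: "continuous (at t within {c..d}) rho"
    using rho_cont_sub[OF c(1), of d] t by (simp add: continuous_on_eq_continuous_within)
  show "continuous (at t within {c..d}) (\<lambda>s. N s / rho s)"
  proof (cases "rho t = 0")
    case False
    then show ?thesis using Nc rc unfolding continuous_within by (intro tendsto_divide) auto
  next
    case True
    then have t0: "t = 0" "1 < \<theta>" using rho_zero[of t] t c by auto
    then have c0: "c = 0" using t c by auto
    have Nz: "N 0 = 0" using N0 True t0 c0 by simp
    have est: "norm (N s / rho s) \<le> M * s" if s: "s \<in> {0..d}" for s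
    proof (cases "s = 0")
      case True then show ?thesis using t0 by (simp add: rho_def)
    next
      case False
      then have s0: "0 < s" using s by auto
      have "norm (N s - N 0) \<le> (rho s * M) * norm (s - 0)"
      proof (rule field_differentiable_bound[of "{0..s}" N N'])
        show "convex {0..s}" by simp
        show "(N has_field_derivative N' z) (at z within {0..s})" if "z \<in> {0..s}" for z
          using N[of z] that s c0 by (auto intro: DERIV_subset)
        show "norm (N' z) \<le> rho s * M" if "z \<in> {0..s}" for z
          using bnd[of z] that s c0 rho_mono[of z s] M
          by simp (meson mult_right_mono order_trans)
      qed (use s0 in auto)
      then have "\<bar>N s\<bar> \<le> rho s * M * s" using Nz s0 by simp
      then show ?thesis using rho_pos[OF s0] s0 by (simp add: abs_divide field_simps)
    qed
    have "((\<lambda>s. N s / rho s) \<longlongrightarrow> 0) (at 0 within {0..d})"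
    proof (rule Lim_null_comparison)
      show "eventually (\<lambda>s. norm (N s / rho s) \<le> M * s) (at 0 within {0..d})"
        using est by (auto simp: eventually_at_filter)
      have "((\<lambda>s. M * s) \<longlongrightarrow> M * 0) (at 0 within {0..d})" by (intro tendsto_intros)
      then show "((\<lambda>s. M * s) \<longlongrightarrow> 0) (at 0 within {0..d})" by simp
    qed
    then show ?thesis using t0 c0 Nz by (simp add: continuous_within)
  qed
qed

end

context hl begin

definition sol :: "real \<Rightarrow> real \<Rightarrow> (real \<Rightarrow> real) \<Rightarrow> (real \<Rightarrow> real) \<Rightarrow> bool" where
  "sol c d u w \<longleftrightarrow> (\<forall>t\<in>{c..d}.
     (u has_real_derivative pq (w t / rho t)) (at t within {c..d}) \<and>
     (w has_real_derivative - (rho t * ph (u t))) (at t within {c..d}))"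

definition intsol :: "real \<Rightarrow> real \<Rightarrow> (real \<Rightarrow> real) \<Rightarrow> (real \<Rightarrow> real) \<Rightarrow> bool" where
  "intsol c d u w \<longleftrightarrow> continuous_on {c..d} u \<and> continuous_on {c..d} (\<lambda>s. pq (w s / rho s)) \<and>
     (\<forall>t\<in>{c..d}. u t = u c + integral {c..t} (\<lambda>s. pq (w s / rho s)) \<and>
                 w t = w c - integral {c..t} (\<lambda>s. rho s * ph (u s)))"

lemma sol_subset:
  assumes "sol c d u w" "c \<le> c'" "d' \<le> d"
  shows "sol c' d' u w"
  unfolding sol_def
proof
  fix t assume t: "t \<in> {c'..d'}"
  then have "t \<in> {c..d}" using assms by auto
  then have "(u has_real_derivative pq (w t / rho t)) (at t within {c..d}) \<and>
     (w has_real_derivative - (rho t * ph (u t))) (at t within {c..d})"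
    using assms(1) unfolding sol_def by blast
  moreover have sub: "{c'..d'} \<subseteq> {c..d}" using assms by auto
  ultimately show "(u has_real_derivative pq (w t / rho t)) (at t within {c'..d'}) \<and>
     (w has_real_derivative - (rho t * ph (u t))) (at t within {c'..d'})"
    using DERIV_subset[OF _ sub] by blast
qed

lemma sol_cont_u: "sol c d u w \<Longrightarrow> continuous_on {c..d} u"
  unfolding sol_def by (intro DERIV_continuous_on) auto

lemma sol_cont_w: "sol c d u w \<Longrightarrow> continuous_on {c..d} w"
  unfolding sol_def by (intro DERIV_continuous_on) auto

lemma cont_ph_comp: "continuous_on S u \<Longrightarrow> continuous_on S (\<lambda>t. ph (u t))"
  by (rule continuous_on_compose2[of UNIV ph]) (auto intro: continuous_at_imp_continuous_on isCont_ph)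

lemma cont_pq_comp: "continuous_on S u \<Longrightarrow> continuous_on S (\<lambda>t. pq (u t))"
  by (rule continuous_on_compose2[of UNIV pq]) (auto intro: continuous_at_imp_continuous_on isCont_pq)

lemma cont_bound:
  fixes f :: "real \<Rightarrow> real"
  assumes "continuous_on {c..d} f"
  obtains M where "0 \<le> M" "\<And>t. t \<in> {c..d} \<Longrightarrow> \<bar>f t\<bar> \<le> M"
proof -
  have "compact (f ` {c..d})" using assms by (intro compact_continuous_image) auto
  then have "bounded (f ` {c..d})" by (rule compact_imp_bounded)
  then obtain b where "b > 0" "\<forall>x\<in>f ` {c..d}. norm x \<le> b" by (auto simp: bounded_pos)
  then show ?thesis using that[of b] by auto
qed

lemma sol_vcont:
  assumes "sol c d u w" "0 \<le> c" "c \<le> d" "rho c = 0 \<Longrightarrow> w c = 0"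
  shows "continuous_on {c..d} (\<lambda>s. w s / rho s)"
proof -
  obtain M where M: "0 \<le> M" "\<And>t. t \<in> {c..d} \<Longrightarrow> \<bar>ph (u t)\<bar> \<le> M"
    using cont_bound[OF cont_ph_comp[OF sol_cont_u[OF assms(1)]]] by blast
  show ?thesis
  proof (rule cont_div_rho[where N' = "\<lambda>t. - (rho t * ph (u t))" and M = M])
    show "(w has_real_derivative - (rho t * ph (u t))) (at t within {c..d})" if "t \<in> {c..d}" for t
      using assms(1) that unfolding sol_def by auto
    show "\<bar>- (rho t * ph (u t))\<bar> \<le> rho t * M" if "t \<in> {c..d}" for t
      using M(2)[OF that] rho_nonneg[of t] by (simp add: abs_mult mult_left_mono)
  qed (use assms M in auto)
qed

lemma sol_pqcont:
  assumes "sol c d u w" "0 \<le> c" "c \<le> d" "rho c = 0 \<Longrightarrow> w c = 0"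
  shows "continuous_on {c..d} (\<lambda>s. pq (w s / rho s))"
  by (rule cont_pq_comp[OF sol_vcont[OF assms]])

lemma D2I:
  assumes "sol c d u w" "0 \<le> c" "c \<le> d" "rho c = 0 \<Longrightarrow> w c = 0"
  shows "intsol c d u w"
  unfolding intsol_def
proof (intro conjI ballI)
  show "continuous_on {c..d} u" by (rule sol_cont_u[OF assms(1)])
  show "continuous_on {c..d} (\<lambda>s. pq (w s / rho s))" by (rule sol_pqcont[OF assms])
  fix t assume t: "t \<in> {c..d}"
  have s: "sol c t u w" by (rule sol_subset[OF assms(1)]) (use t in auto)
  have "((\<lambda>s. pq (w s / rho s)) has_integral (u t - u c)) {c..t}"
    using s t unfolding sol_def
    by (intro fundamental_theorem_of_calculus) (auto simp: has_real_derivative_iff_has_vector_derivative)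
  then show "u t = u c + integral {c..t} (\<lambda>s. pq (w s / rho s))" by (simp add: integral_unique)
  have "((\<lambda>s. - (rho s * ph (u s))) has_integral (w t - w c)) {c..t}"
    using s t unfolding sol_def
    by (intro fundamental_theorem_of_calculus) (auto simp: has_real_derivative_iff_has_vector_derivative)
  then have "integral {c..t} (\<lambda>s. - (rho s * ph (u s))) = w t - w c" by (rule integral_unique)
  then show "w t = w c - integral {c..t} (\<lambda>s. rho s * ph (u s))"
    by simp
qed

lemma intsol_rcont:
  assumes "intsol c d u w" "0 \<le> c"
  shows "continuous_on {c..d} (\<lambda>s. rho s * ph (u s))"
proof -
  have "continuous_on {c..d} u" using assms unfolding intsol_def by auto
  then show ?thesis by (intro continuous_on_mult rho_cont_sub[OF assms(2)] cont_ph_comp)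
qed

lemma I2D:
  assumes "intsol c d u w" "0 \<le> c"
  shows "sol c d u w"
  unfolding sol_def
proof (intro ballI conjI)
  fix t assume t: "t \<in> {c..d}"
  have c1: "continuous_on {c..d} (\<lambda>s. pq (w s / rho s))" using assms unfolding intsol_def by auto
  have c2: "continuous_on {c..d} (\<lambda>s. rho s * ph (u s))" by (rule intsol_rcont[OF assms])
  have d1: "((\<lambda>x. integral {c..x} (\<lambda>s. pq (w s / rho s))) has_real_derivative pq (w t / rho t)) (at t within {c..d})"
    using integral_has_vector_derivative[OF c1 t] by (simp add: has_real_derivative_iff_has_vector_derivative)
  have d2: "((\<lambda>x. integral {c..x} (\<lambda>s. rho s * ph (u s))) has_real_derivative rho t * ph (u t)) (at t within {c..d})"
    using integral_has_vector_derivative[OF c2 t] by (simp add: has_real_derivative_iff_has_vector_derivative)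
  have "((\<lambda>x. u c + integral {c..x} (\<lambda>s. pq (w s / rho s))) has_real_derivative 0 + pq (w t / rho t)) (at t within {c..d})"
    by (intro DERIV_add DERIV_const d1)
  moreover have ueq: "\<And>y. y \<in> {c..d} \<Longrightarrow> u y = u c + integral {c..y} (\<lambda>s. pq (w s / rho s))"
    using assms(1) unfolding intsol_def by blast
  ultimately show "(u has_real_derivative pq (w t / rho t)) (at t within {c..d})"
    using DERIV_transform_on[OF t ueq] by simp
  have "((\<lambda>x. w c - integral {c..x} (\<lambda>s. rho s * ph (u s))) has_real_derivative 0 - rho t * ph (u t)) (at t within {c..d})"
    by (intro DERIV_diff DERIV_const d2)
  moreover have weq: "\<And>y. y \<in> {c..d} \<Longrightarrow> w y = w c - integral {c..y} (\<lambda>s. rho s * ph (u s))"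
    using assms(1) unfolding intsol_def by blast
  ultimately show "(w has_real_derivative - (rho t * ph (u t))) (at t within {c..d})"
    using DERIV_transform_on[OF t weq] by simp
qed

definition "qq = p / (p - 1)"

lemma qq_gt1: "1 < qq" and qq_al: "qq - 1 = al"
  using p2 by (auto simp: qq_def al_def field_simps)

definition en :: "(real \<Rightarrow> real) \<Rightarrow> (real \<Rightarrow> real) \<Rightarrow> real \<Rightarrow> real" where
  "en u w t = \<bar>u t\<bar> powr p / p + \<bar>w t / rho t\<bar> powr qq / qq"

lemma en_nonneg: "0 \<le> en u w t"
  using p2 qq_gt1 unfolding en_def by (intro add_nonneg_nonneg divide_nonneg_pos) auto

lemma isCont_abs_powr: fixes s :: real assumes "1 < s" shows "isCont (\<lambda>x. \<bar>x\<bar> powr s) x"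
  using abs_powr_deriv[OF assms] by (rule DERIV_isCont)

lemma cont_abs_powr_comp: "1 < (s::real) \<Longrightarrow> continuous_on S f \<Longrightarrow> continuous_on S (\<lambda>t. \<bar>f t\<bar> powr s)"
  by (rule continuous_on_compose2[of UNIV "\<lambda>x. \<bar>x\<bar> powr s"])
     (auto intro: continuous_at_imp_continuous_on isCont_abs_powr)

lemma energy_mono:
  assumes S: "sol c d u w" and c: "0 \<le> c" "rho c = 0 \<Longrightarrow> w c = 0"
    and xy: "c \<le> x" "x \<le> y" "y \<le> d"
  shows "en u w y \<le> en u w x"
proof (cases "x = y")
  case False
  then have xy': "x < y" using xy by auto
  have cd: "c \<le> d" using xy by auto
  have cu: "continuous_on {x..y} u"
    by (rule continuous_on_subset[OF sol_cont_u[OF S]]) (use xy in auto)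
  have cv: "continuous_on {x..y} (\<lambda>s. w s / rho s)"
    by (rule continuous_on_subset[OF sol_vcont[OF S c(1) cd c(2)]]) (use xy in auto)
  have ce: "continuous_on {x..y} (en u w)"
    unfolding en_def[abs_def] using p2 qq_gt1
    by (intro continuous_intros cont_abs_powr_comp cu cv) auto
  have D: "\<exists>D. DERIV (en u w) t :> D \<and> D \<le> 0" if t: "x < t" "t < y" for t
  proof -
    have t0: "0 < t" using t xy c by auto
    have ti: "c < t" "t < d" using t xy by auto
    have at: "at t within {c..d} = at t" by (rule at_within_Icc_at[OF ti])
    have du: "DERIV u t :> pq (w t / rho t)" and dw: "DERIV w t :> - (rho t * ph (u t))"
      using S ti unfolding sol_def at by (auto simp flip: at)
    define R where "R = rho t"
    define r' where "r' = (\<theta> - 1) * t powr (\<theta> - 2)"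
    have R: "0 < R" using rho_pos[OF t0] by (simp add: R_def)
    have dr: "DERIV rho t :> r'" unfolding r'_def by (rule rho_deriv[OF t0])
    have r'0: "0 \<le> r'" using th1 by (simp add: r'_def)
    define V where "V = w t / R"
    have dv: "DERIV (\<lambda>s. w s / rho s) t :> ((- (R * ph (u t))) * R - w t * r') / (R * R)"
      using DERIV_divide[OF dw dr] R by (simp add: R_def)
    have d1: "DERIV (\<lambda>s. \<bar>u s\<bar> powr p / p) t :> (p * psi (p - 1) (u t) * pq (w t / rho t)) / p"
      by (intro DERIV_cdivide DERIV_chain2[OF abs_powr_deriv du]) (use p2 in auto)
    have d2: "DERIV (\<lambda>s. \<bar>w s / rho s\<bar> powr qq / qq) t :>
        (qq * psi (qq - 1) (w t / rho t) * (((- (R * ph (u t))) * R - w t * r') / (R * R))) / qq"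
      by (intro DERIV_cdivide DERIV_chain2[OF abs_powr_deriv dv]) (use qq_gt1 in auto)
    have "DERIV (en u w) t :> (p * psi (p - 1) (u t) * pq (w t / rho t)) / p +
        (qq * psi (qq - 1) (w t / rho t) * (((- (R * ph (u t))) * R - w t * r') / (R * R))) / qq"
      unfolding en_def[abs_def] by (intro DERIV_add d1 d2)
    moreover have "(p * psi (p - 1) (u t) * pq (w t / rho t)) / p +
        (qq * psi (qq - 1) (w t / rho t) * (((- (R * ph (u t))) * R - w t * r') / (R * R))) / qq
        = - (pq V * V) * r' / R"
    proof -
      have e1: "psi (p - 1) (u t) = ph (u t)" by (simp add: ph_eq)
      have e2: "psi (qq - 1) (w t / rho t) = pq V" by (simp add: qq_al pq_def V_def R_def)
      have e3: "w t = V * R" using R by (simp add: V_def)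
      have e4: "pq (w t / rho t) = pq V" by (simp add: V_def R_def)
      have e5: "((- (R * ph (u t))) * R - w t * r') / (R * R) = - ph (u t) - V * r' / R"
        using R unfolding e3 by (simp add: field_simps)
      have pn: "p \<noteq> 0" "qq \<noteq> 0" using p2 qq_gt1 by auto
      have "(p * psi (p - 1) (u t) * pq (w t / rho t)) / p +
        (qq * psi (qq - 1) (w t / rho t) * (((- (R * ph (u t))) * R - w t * r') / (R * R))) / qq
        = ph (u t) * pq V + pq V * (- ph (u t) - V * r' / R)"
        unfolding e1 e2 e4 e5 using pn by simp
      also have "\<dots> = - (pq V * V) * r' / R" by (simp add: algebra_simps)
      finally show ?thesis .
    qed
    moreover have "- (pq V * V) * r' / R \<le> 0"
      using psi_mult_self_nonneg[of al V] r'0 R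
      by (simp add: pq_def divide_nonpos_pos mult_nonneg_nonneg)
    ultimately show ?thesis by auto
  qed
  have "\<exists>l z. x < z \<and> z < y \<and> DERIV (en u w) z :> l \<and> en u w y - en u w x = (y - x) * l"
    using D by (intro MVT[OF xy' ce]) (auto simp: real_differentiable_def)
  then obtain l z where lz: "x < z" "z < y" "DERIV (en u w) z :> l" "en u w y - en u w x = (y - x) * l"
    by blast
  obtain D where "DERIV (en u w) z :> D" "D \<le> 0" using D[OF lz(1,2)] by blast
  then have "l \<le> 0" using DERIV_unique[OF lz(3)] by auto
  then have "(y - x) * l \<le> 0" using xy' by (simp add: mult_nonneg_nonpos)
  then show ?thesis using lz(4) by simp
qed simp

lemma sol_zero:
  assumes S: "sol c d u w" and c: "0 \<le> c" and u0: "u c = 0" and w0: "w c = 0"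
    and t: "t \<in> {c..d}"
  shows "u t = 0 \<and> w t = 0"
proof -
  have "en u w t \<le> en u w c" using energy_mono[OF S c _ _ _] t w0 by auto
  also have "en u w c = 0" using u0 w0 p2 qq_gt1 by (simp add: en_def)
  finally have e0: "en u w t = 0" using en_nonneg[of u w t] by linarith
  have a: "0 \<le> \<bar>u t\<bar> powr p / p" "0 \<le> \<bar>w t / rho t\<bar> powr qq / qq"
    using p2 qq_gt1 by auto
  then have "\<bar>u t\<bar> powr p / p = 0" "\<bar>w t / rho t\<bar> powr qq / qq = 0"
    using e0 unfolding en_def by linarith+
  then have "u t = 0" "w t / rho t = 0" using p2 qq_gt1 by auto
  moreover have "w t = 0"
  proof (cases "t = 0")
    case True then show ?thesis using t c w0 by auto
  next
    case False then have "0 < t" using t c by auto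
    then show ?thesis using \<open>w t / rho t = 0\<close> rho_pos[of t] by auto
  qed
  ultimately show ?thesis by simp
qed

lemma en_bound:
  assumes "en u w t \<le> G"
  shows "\<bar>u t\<bar> \<le> max 1 (p * G)" "\<bar>w t / rho t\<bar> \<le> max 1 (qq * G)"
proof -
  have a: "0 \<le> \<bar>u t\<bar> powr p / p" "0 \<le> \<bar>w t / rho t\<bar> powr qq / qq"
    using p2 qq_gt1 by auto
  have "\<bar>u t\<bar> powr p / p \<le> G" "\<bar>w t / rho t\<bar> powr qq / qq \<le> G"
    using assms a unfolding en_def by linarith+
  then have b: "\<bar>u t\<bar> powr p \<le> p * G" "\<bar>w t / rho t\<bar> powr qq \<le> qq * G"
    using p2 qq_gt1 by (auto simp: field_simps)
  have gen: "x \<le> max 1 C" if "x powr s \<le> C" "1 \<le> s" "0 \<le> x" for x s C :: real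
  proof (cases "x \<le> 1")
    case False
    then have "x powr 1 \<le> x powr s" using that by (intro powr_mono) auto
    then show ?thesis using that False by auto
  qed auto
  show "\<bar>u t\<bar> \<le> max 1 (p * G)" using gen[OF b(1)] p2 by auto
  show "\<bar>w t / rho t\<bar> \<le> max 1 (qq * G)" using gen[OF b(2)] qq_gt1 by auto
qed

end

lemma int_bound:
  fixes h :: "real \<Rightarrow> real"
  assumes "c \<le> s" "continuous_on {c..s} h" "\<And>\<tau>. \<tau> \<in> {c..s} \<Longrightarrow> \<bar>h \<tau>\<bar> \<le> B"
  shows "\<bar>integral {c..s} h\<bar> \<le> B * (s - c)"
proof -
  have B: "0 \<le> B" using assms(3)[of c] assms(1) by auto
  have "(h has_integral integral {c..s} h) {c..s}"
    using assms(2) by (intro integrable_integral integrable_continuous_interval)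
  then show ?thesis
    using has_integral_bound_real[of B "{}" h "integral {c..s} h" c s] B assms(3) content_real[OF assms(1)]
    by auto
qed

locale loc = hl +
  fixes c a wc :: real
  assumes c0: "0 \<le> c" and wc0: "rho c = 0 \<Longrightarrow> wc = 0"
begin

definition NN :: "(real \<Rightarrow> real) \<Rightarrow> real \<Rightarrow> real" where
  "NN f s = wc - integral {c..s} (\<lambda>\<tau>. rho \<tau> * ph (f \<tau>))"
definition VV :: "(real \<Rightarrow> real) \<Rightarrow> real \<Rightarrow> real" where
  "VV f s = NN f s / rho s"
definition TT :: "(real \<Rightarrow> real) \<Rightarrow> real \<Rightarrow> real" where
  "TT f t = a + integral {c..t} (\<lambda>s. pq (VV f s))"

lemma NN_c[simp]: "NN f c = wc" by (simp add: NN_def)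
lemma TT_c[simp]: "TT f c = a" by (simp add: TT_def)

lemma int_cont: "continuous_on {c..d} f \<Longrightarrow> continuous_on {c..d} (\<lambda>\<tau>. rho \<tau> * ph (f \<tau>))"
  by (intro continuous_on_mult rho_cont_sub[OF c0] cont_ph_comp)

lemma NN_deriv:
  assumes "continuous_on {c..d} f" "t \<in> {c..d}"
  shows "(NN f has_real_derivative - (rho t * ph (f t))) (at t within {c..d})"
proof -
  have "((\<lambda>x. integral {c..x} (\<lambda>\<tau>. rho \<tau> * ph (f \<tau>))) has_real_derivative rho t * ph (f t)) (at t within {c..d})"
    using integral_has_vector_derivative[OF int_cont[OF assms(1)] assms(2)]
    by (simp add: has_real_derivative_iff_has_vector_derivative)
  then have "((\<lambda>x. wc - integral {c..x} (\<lambda>\<tau>. rho \<tau> * ph (f \<tau>))) has_real_derivative 0 - rho t * ph (f t)) (at t within {c..d})"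
    by (intro DERIV_diff DERIV_const)
  then show ?thesis by (simp add: NN_def[abs_def])
qed

lemma VV_cont:
  assumes "c \<le> d" "continuous_on {c..d} f"
  shows "continuous_on {c..d} (VV f)"
proof -
  obtain M where M: "0 \<le> M" "\<And>t. t \<in> {c..d} \<Longrightarrow> \<bar>ph (f t)\<bar> \<le> M"
    using cont_bound[OF cont_ph_comp[OF assms(2)]] by blast
  have "continuous_on {c..d} (\<lambda>s. NN f s / rho s)"
  proof (rule cont_div_rho[where N' = "\<lambda>t. - (rho t * ph (f t))" and M = M])
    show "(NN f has_real_derivative - (rho t * ph (f t))) (at t within {c..d})" if "t \<in> {c..d}" for t
      using NN_deriv[OF assms(2) that] .
    show "\<bar>- (rho t * ph (f t))\<bar> \<le> rho t * M" if "t \<in> {c..d}" for t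
      using M(2)[OF that] rho_nonneg[of t] by (simp add: abs_mult mult_left_mono)
    show "rho c = 0 \<Longrightarrow> NN f c = 0" unfolding NN_c by (rule wc0)
  qed (use assms M c0 in auto)
  then show ?thesis by (simp add: VV_def[abs_def])
qed

lemma pqVV_cont:
  assumes "c \<le> d" "continuous_on {c..d} f"
  shows "continuous_on {c..d} (\<lambda>s. pq (VV f s))"
  by (rule cont_pq_comp[OF VV_cont[OF assms]])

lemma TT_cont:
  assumes "c \<le> d" "continuous_on {c..d} f"
  shows "continuous_on {c..d} (TT f)"
proof -
  have "continuous_on {c..d} (\<lambda>t. integral {c..t} (\<lambda>s. pq (VV f s)))"
    by (intro indefinite_integral_continuous_1 integrable_continuous_interval pqVV_cont assms)
  then show ?thesis unfolding TT_def[abs_def] by (intro continuous_intros)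
qed

lemma I_bound:
  assumes "c \<le> s" "continuous_on {c..s} f" "\<And>\<tau>. \<tau> \<in> {c..s} \<Longrightarrow> \<bar>f \<tau>\<bar> \<le> K"
  shows "\<bar>integral {c..s} (\<lambda>\<tau>. rho \<tau> * ph (f \<tau>))\<bar> \<le> rho s * K powr (p - 1) * (s - c)"
proof (rule int_bound[OF assms(1) int_cont[OF assms(2)]])
  fix \<tau> assume t: "\<tau> \<in> {c..s}"
  have "\<bar>ph (f \<tau>)\<bar> \<le> K powr (p - 1)" using ph_bound assms(3)[OF t] by auto
  moreover have "0 \<le> rho \<tau>" "rho \<tau> \<le> rho s" using t c0 by (auto intro: rho_nonneg rho_mono)
  ultimately show "\<bar>rho \<tau> * ph (f \<tau>)\<bar> \<le> rho s * K powr (p - 1)"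
    by (simp add: abs_mult) (meson abs_ge_zero mult_mono order_trans rho_nonneg)
qed

lemma VV_bound:
  assumes "c \<le> s" "continuous_on {c..s} f" "\<And>\<tau>. \<tau> \<in> {c..s} \<Longrightarrow> \<bar>f \<tau>\<bar> \<le> K"
  shows "\<bar>VV f s\<bar> \<le> \<bar>wc\<bar> / rho c + (s - c) * K powr (p - 1)"
proof (cases "s = c")
  case True then show ?thesis by (simp add: VV_def abs_divide rho_nonneg)
next
  case False
  then have sc: "c < s" using assms by auto
  have rs: "0 < rho s" using sc c0 by (intro rho_pos) auto
  have w1: "\<bar>wc\<bar> / rho s \<le> \<bar>wc\<bar> / rho c"
  proof (cases "wc = 0")
    case False
    then have "0 < rho c" using wc0 rho_nonneg[of c] by fastforce
    then show ?thesis using rho_mono[of c s] c0 sc by (intro divide_left_mono) auto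
  qed simp
  have "\<bar>NN f s\<bar> \<le> \<bar>wc\<bar> + rho s * K powr (p - 1) * (s - c)"
    using I_bound[OF assms] unfolding NN_def by linarith
  then have "\<bar>VV f s\<bar> \<le> (\<bar>wc\<bar> + rho s * K powr (p - 1) * (s - c)) / rho s"
    unfolding VV_def using rs by (simp add: abs_divide divide_right_mono)
  also have "\<dots> = \<bar>wc\<bar> / rho s + (s - c) * K powr (p - 1)"
    using rs by (simp add: field_simps)
  finally show ?thesis using w1 by linarith
qed

lemma VV_diff:
  assumes "c \<le> s" "continuous_on {c..s} f" "continuous_on {c..s} g"
    and b: "\<And>\<tau>. \<tau> \<in> {c..s} \<Longrightarrow> \<bar>f \<tau>\<bar> \<le> K \<and> \<bar>g \<tau>\<bar> \<le> K \<and> \<bar>f \<tau> - g \<tau>\<bar> \<le> d"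
  shows "\<bar>VV f s - VV g s\<bar> \<le> (s - c) * ((p - 1) * K powr (p - 2) * d)"
proof (cases "s = c")
  case True then show ?thesis by (simp add: VV_def)
next
  case False
  then have sc: "c < s" using assms by auto
  have rs: "0 < rho s" using sc c0 by (intro rho_pos) auto
  define L where "L = (p - 1) * K powr (p - 2)"
  have L0: "0 \<le> L" using p2 by (simp add: L_def)
  have i1: "(\<lambda>\<tau>. rho \<tau> * ph (f \<tau>)) integrable_on {c..s}"
    by (intro integrable_continuous_interval int_cont assms)
  have i2: "(\<lambda>\<tau>. rho \<tau> * ph (g \<tau>)) integrable_on {c..s}"
    by (intro integrable_continuous_interval int_cont assms)
  have "VV f s - VV g s = (integral {c..s} (\<lambda>\<tau>. rho \<tau> * ph (g \<tau>)) - integral {c..s} (\<lambda>\<tau>. rho \<tau> * ph (f \<tau>))) / rho s"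
    unfolding VV_def NN_def using rs by (simp add: field_simps)
  also have "\<dots> = integral {c..s} (\<lambda>\<tau>. rho \<tau> * ph (g \<tau>) - rho \<tau> * ph (f \<tau>)) / rho s"
    using integral_diff[OF i2 i1] by simp
  finally have eq: "VV f s - VV g s = integral {c..s} (\<lambda>\<tau>. rho \<tau> * ph (g \<tau>) - rho \<tau> * ph (f \<tau>)) / rho s" .
  have "\<bar>integral {c..s} (\<lambda>\<tau>. rho \<tau> * ph (g \<tau>) - rho \<tau> * ph (f \<tau>))\<bar> \<le> (rho s * (L * d)) * (s - c)"
  proof (rule int_bound[OF assms(1)])
    show "continuous_on {c..s} (\<lambda>\<tau>. rho \<tau> * ph (g \<tau>) - rho \<tau> * ph (f \<tau>))"
      by (intro continuous_on_diff int_cont assms)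
    fix \<tau> assume t: "\<tau> \<in> {c..s}"
    have "\<bar>ph (g \<tau>) - ph (f \<tau>)\<bar> \<le> L * \<bar>g \<tau> - f \<tau>\<bar>"
      using ph_lip[of "g \<tau>" K "f \<tau>"] b[OF t] by (simp add: L_def)
    also have "\<dots> \<le> L * d" using b[OF t] L0 by (intro mult_left_mono) (auto simp: abs_minus_commute)
    finally have e1: "\<bar>ph (g \<tau>) - ph (f \<tau>)\<bar> \<le> L * d" .
    have "0 \<le> rho \<tau>" "rho \<tau> \<le> rho s" using t c0 by (auto intro: rho_nonneg rho_mono)
    then have "rho \<tau> * \<bar>ph (g \<tau>) - ph (f \<tau>)\<bar> \<le> rho s * (L * d)"
      using e1 by (meson abs_ge_zero mult_mono order_trans)
    then show "\<bar>rho \<tau> * ph (g \<tau>) - rho \<tau> * ph (f \<tau>)\<bar> \<le> rho s * (L * d)"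
      using \<open>0 \<le> rho \<tau>\<close> by (simp add: abs_mult right_diff_distrib[symmetric])
  qed
  then have "\<bar>integral {c..s} (\<lambda>\<tau>. rho \<tau> * ph (g \<tau>) - rho \<tau> * ph (f \<tau>))\<bar> / rho s \<le> (rho s * (L * d)) * (s - c) / rho s"
    by (rule divide_right_mono) (use rs in simp)
  moreover have "\<bar>VV f s - VV g s\<bar> = \<bar>integral {c..s} (\<lambda>\<tau>. rho \<tau> * ph (g \<tau>) - rho \<tau> * ph (f \<tau>))\<bar> / rho s"
    unfolding eq using rs by (simp add: abs_divide)
  ultimately have "\<bar>VV f s - VV g s\<bar> \<le> (rho s * (L * d)) * (s - c) / rho s"
    by simp
  also have "\<dots> = (s - c) * (L * d)" using rs by simp
  finally show ?thesis by (simp add: L_def)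
qed

end

context loc begin

lemma sgn_VV:
  assumes w: "wc = 0" and a: "a \<noteq> 0" and sc: "c < s" and cf: "continuous_on {c..s} f"
    and ball: "\<And>\<tau>. \<tau> \<in> {c..s} \<Longrightarrow> \<bar>f \<tau> - a\<bar> \<le> \<bar>a\<bar> / 2"
  shows "sgn a * VV f s \<le> - ((\<bar>a\<bar> / 2) powr (p - 1) * (s - c) / \<theta>)"
proof -
  define m0 where "m0 = (\<bar>a\<bar> / 2) powr (p - 1)"
  have m00: "0 \<le> m0" by (simp add: m0_def)
  have rs: "0 < rho s" using sc c0 by (intro rho_pos) auto
  have h0: "m0 \<le> sgn a * ph (f \<tau>)" if t: "\<tau> \<in> {c..s}" for \<tau>
  proof (cases "a > 0")
    case True
    then have ft: "a / 2 \<le> f \<tau>" using ball[OF t] abs_le_iff[of "f \<tau> - a" "\<bar>a\<bar> / 2"] by auto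
    then have "(a / 2) powr (p - 1) \<le> f \<tau> powr (p - 1)" using True p2 by (intro powr_mono2) auto
    then show ?thesis using True ft by (simp add: m0_def ph_eq psi_pos)
  next
    case False
    then have an: "a < 0" using a by auto
    then have ft: "f \<tau> \<le> a / 2" using ball[OF t] abs_le_iff[of "f \<tau> - a" "\<bar>a\<bar> / 2"] by auto
    then have "(- a / 2) powr (p - 1) \<le> (- f \<tau>) powr (p - 1)" using an p2 by (intro powr_mono2) auto
    then show ?thesis using an ft by (simp add: m0_def ph_eq psi_negv)
  qed
  have h1: "m0 * rho \<tau> \<le> sgn a * (rho \<tau> * ph (f \<tau>))" if t: "\<tau> \<in> {c..s}" for \<tau>
    using mult_right_mono[OF h0[OF t] rho_nonneg[of \<tau>]] by (simp add: algebra_simps)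
  have ic: "continuous_on {c..s} (\<lambda>\<tau>. rho \<tau> * ph (f \<tau>))" by (rule int_cont[OF cf])
  have h2: "((\<lambda>\<tau>. m0 * rho \<tau>) has_integral m0 * (s powr \<theta> / \<theta> - c powr \<theta> / \<theta>)) {c..s}"
    using rho_integral[of c s] c0 sc by (intro has_integral_mult_right) auto
  have h3: "integral {c..s} (\<lambda>\<tau>. m0 * rho \<tau>) \<le> integral {c..s} (\<lambda>\<tau>. sgn a * (rho \<tau> * ph (f \<tau>)))"
  proof (rule integral_le)
    show "(\<lambda>\<tau>. m0 * rho \<tau>) integrable_on {c..s}" using h2 by blast
    show "(\<lambda>\<tau>. sgn a * (rho \<tau> * ph (f \<tau>))) integrable_on {c..s}"
      by (intro integrable_continuous_interval continuous_on_mult continuous_on_const ic)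
  qed (use h1 in auto)
  define I where "I = integral {c..s} (\<lambda>\<tau>. rho \<tau> * ph (f \<tau>))"
  have h2': "integral {c..s} (\<lambda>\<tau>. m0 * rho \<tau>) = m0 * (s powr \<theta> / \<theta> - c powr \<theta> / \<theta>)"
    by (rule integral_unique[OF h2])
  have "m0 * (s powr \<theta> / \<theta> - c powr \<theta> / \<theta>) \<le> integral {c..s} (\<lambda>\<tau>. sgn a * (rho \<tau> * ph (f \<tau>)))"
    using h3 unfolding h2' .
  also have "\<dots> = sgn a * I" by (simp add: I_def)
  finally have "m0 * (s powr \<theta> / \<theta> - c powr \<theta> / \<theta>) \<le> sgn a * I" .
  moreover have "m0 * ((s - c) * rho s / \<theta>) \<le> m0 * (s powr \<theta> / \<theta> - c powr \<theta> / \<theta>)"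
    using rho_int_lb[of c s] c0 sc m00 by (intro mult_left_mono) auto
  ultimately have lb: "m0 * ((s - c) * rho s / \<theta>) \<le> sgn a * I" by linarith
  have "sgn a * VV f s = - (sgn a * I) / rho s" unfolding VV_def NN_def I_def by (simp add: w)
  also have "\<dots> \<le> - (m0 * ((s - c) * rho s / \<theta>)) / rho s"
    using lb rs by (intro divide_right_mono) auto
  also have "\<dots> = - (m0 * (s - c) / \<theta>)" using rs th1 by (simp add: field_simps)
  finally show ?thesis by (simp add: m0_def)
qed

lemma ball_abs: "\<bar>x - a\<bar> \<le> D \<Longrightarrow> \<bar>x\<bar> \<le> \<bar>a\<bar> + D" by linarith

lemma powr_aux:
  assumes "0 < m0" "0 < x" "x \<le> 1"
  shows "(m0 * x) powr (al - 1) * x \<le> m0 powr (al - 1)"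
proof -
  have "(m0 * x) powr (al - 1) * x = m0 powr (al - 1) * (x powr (al - 1) * x powr 1)"
    using assms by (simp add: powr_mult)
  also have "x powr (al - 1) * x powr 1 = x powr al"
    by (subst powr_add[symmetric]) simp
  also have "x powr al \<le> 1" using assms al_pos by (intro powr_le1) auto
  then have "m0 powr (al - 1) * x powr al \<le> m0 powr (al - 1) * 1"
    by (intro mult_left_mono) auto
  finally show ?thesis by simp
qed

end

context loc begin

lemma B1_gen:
  assumes e: "0 < e0" "e0 \<le> 1" "e0 * (1 + \<bar>wc\<bar> / rho c + (\<bar>a\<bar> + D) powr (p - 1)) \<le> D"
    and s: "c \<le> s" "s \<le> c + e0" and cf: "continuous_on {c..s} f"
    and ball: "\<And>\<tau>. \<tau> \<in> {c..s} \<Longrightarrow> \<bar>f \<tau> - a\<bar> \<le> D"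
  shows "e0 * \<bar>pq (VV f s)\<bar> \<le> D"
proof -
  have "\<bar>VV f s\<bar> \<le> \<bar>wc\<bar> / rho c + (s - c) * (\<bar>a\<bar> + D) powr (p - 1)"
    using VV_bound[OF s(1) cf, of "\<bar>a\<bar> + D"] ball ball_abs by blast
  also have "(s - c) * (\<bar>a\<bar> + D) powr (p - 1) \<le> 1 * (\<bar>a\<bar> + D) powr (p - 1)"
    using s e by (intro mult_right_mono) auto
  finally have "\<bar>pq (VV f s)\<bar> \<le> 1 + \<bar>wc\<bar> / rho c + (\<bar>a\<bar> + D) powr (p - 1)"
    using pq_bound[of "VV f s"] by linarith
  then have "e0 * \<bar>pq (VV f s)\<bar> \<le> e0 * (1 + \<bar>wc\<bar> / rho c + (\<bar>a\<bar> + D) powr (p - 1))"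
    using e by (intro mult_left_mono) auto
  then show ?thesis using e by linarith
qed

lemma e0C: "0 \<le> C \<Longrightarrow> e0 \<le> 1 / (2 * C + 2) \<Longrightarrow> e0 * C \<le> (1::real) / 2"
proof -
  assume C: "0 \<le> C" and e: "e0 \<le> 1 / (2 * C + 2)"
  have "e0 * C \<le> 1 / (2 * C + 2) * C" using C e by (intro mult_right_mono) auto
  also have "\<dots> \<le> 1 / 2" using C by (simp add: field_simps)
  finally show ?thesis .
qed

lemma core:
  assumes nz: "a \<noteq> 0 \<or> wc \<noteq> 0"
  obtains D e0 C where "0 < D" "0 < e0" "e0 \<le> 1" "0 \<le> C" "e0 * C \<le> 1 / 2"
    "\<And>f s. c \<le> s \<Longrightarrow> s \<le> c + e0 \<Longrightarrow> continuous_on {c..s} f \<Longrightarrow>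
        (\<And>\<tau>. \<tau> \<in> {c..s} \<Longrightarrow> \<bar>f \<tau> - a\<bar> \<le> D) \<Longrightarrow> e0 * \<bar>pq (VV f s)\<bar> \<le> D"
    "\<And>f g d s. c \<le> s \<Longrightarrow> s \<le> c + e0 \<Longrightarrow> continuous_on {c..s} f \<Longrightarrow> continuous_on {c..s} g \<Longrightarrow>
        (\<And>\<tau>. \<tau> \<in> {c..s} \<Longrightarrow> \<bar>f \<tau> - a\<bar> \<le> D) \<Longrightarrow> (\<And>\<tau>. \<tau> \<in> {c..s} \<Longrightarrow> \<bar>g \<tau> - a\<bar> \<le> D) \<Longrightarrow>
        (\<And>\<tau>. \<tau> \<in> {c..s} \<Longrightarrow> \<bar>f \<tau> - g \<tau>\<bar> \<le> d) \<Longrightarrow> \<bar>pq (VV f s) - pq (VV g s)\<bar> \<le> C * d"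
proof (cases "wc = 0")
  case False
  have rc: "0 < rho c" using False wc0 rho_nonneg[of c] by fastforce
  define b where "b = wc / rho c"
  have b0: "0 < \<bar>b\<bar>" using False rc by (simp add: b_def)
  obtain \<delta> where \<delta>: "0 < \<delta>" "\<And>x'. x' \<in> {0..} \<Longrightarrow> dist x' c < \<delta> \<Longrightarrow> dist (rho x') (rho c) < rho c / 4"
    using rho_cont c0 rc unfolding continuous_on_iff by (metis atLeast_iff divide_pos_pos zero_less_numeral)
  define D :: real where "D = 1"
  define K where "K = \<bar>a\<bar> + D"
  define Bp where "Bp = K powr (p - 1)"
  define Lp where "Lp = (p - 1) * K powr (p - 2)"
  define m where "m = \<bar>b\<bar> / 2"
  define C where "C = al * m powr (al - 1) * Lp"
  define Wb where "Wb = \<bar>wc\<bar> / rho c"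
  define e0 where "e0 = min (min 1 (\<delta> / 2)) (min ((\<bar>b\<bar> / 4) / (Bp + 1)) (min (1 / (1 + Wb + Bp)) (1 / (2 * C + 2))))"
  have Bp0: "0 \<le> Bp" by (simp add: Bp_def)
  have Lp0: "0 \<le> Lp" using p2 by (simp add: Lp_def)
  have m0: "0 < m" using b0 by (simp add: m_def)
  have C0: "0 \<le> C" using al_pos Lp0 by (simp add: C_def)
  have Wb0: "0 \<le> Wb" using rc by (simp add: Wb_def)
  have e0p: "0 < e0" using \<delta> b0 Bp0 Wb0 C0 by (simp add: e0_def)
  have e01: "e0 \<le> 1" by (simp add: e0_def)
  have e0d: "e0 \<le> \<delta> / 2"
  proof -
    have "e0 \<le> min 1 (\<delta> / 2)" unfolding e0_def by (rule min.cobounded1)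
    also have "\<dots> \<le> \<delta> / 2" by (rule min.cobounded2)
    finally show ?thesis .
  qed
  have e0b: "e0 * Bp \<le> \<bar>b\<bar> / 4"
  proof -
    have "e0 \<le> (\<bar>b\<bar> / 4) / (Bp + 1)" by (simp add: e0_def)
    then have "e0 * Bp \<le> (\<bar>b\<bar> / 4) / (Bp + 1) * Bp" using Bp0 by (intro mult_right_mono) auto
    also have "\<dots> \<le> \<bar>b\<bar> / 4" using Bp0 b0 by (simp add: field_simps)
    finally show ?thesis .
  qed
  have e0W: "e0 * (1 + Wb + Bp) \<le> 1"
  proof -
    have "e0 \<le> 1 / (1 + Wb + Bp)" by (simp add: e0_def)
    then have "e0 * (1 + Wb + Bp) \<le> 1 / (1 + Wb + Bp) * (1 + Wb + Bp)"
      using Wb0 Bp0 by (intro mult_right_mono) auto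
    then show ?thesis using Wb0 Bp0 by simp
  qed
  have e0C': "e0 * C \<le> 1 / 2" using C0 by (rule e0C) (simp add: e0_def)
  have close: "\<bar>VV h s - b\<bar> \<le> \<bar>b\<bar> / 2"
    if s: "c < s" "s \<le> c + e0" and ch: "continuous_on {c..s} h"
      and bh: "\<And>\<tau>. \<tau> \<in> {c..s} \<Longrightarrow> \<bar>h \<tau> - a\<bar> \<le> D" for h s
  proof -
    have rs: "0 < rho s" using s c0 by (intro rho_pos) auto
    have rcs: "rho c \<le> rho s" using s c0 by (intro rho_mono) auto
    have "dist (rho s) (rho c) < rho c / 4"
      using \<delta>(2)[of s] s c0 e0d \<delta>(1) by (auto simp: dist_real_def)
    then have "\<bar>rho s - rho c\<bar> < rho c / 4" by (simp add: dist_real_def)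
    then have rd: "rho s - rho c \<le> rho c / 4" using abs_ge_self[of "rho s - rho c"] by linarith
    define I where "I = integral {c..s} (\<lambda>\<tau>. rho \<tau> * ph (h \<tau>))"
    have "\<bar>I\<bar> \<le> rho s * K powr (p - 1) * (s - c)"
      unfolding I_def using s ch bh ball_abs by (intro I_bound) (auto simp: K_def)
    then have "\<bar>I\<bar> / rho s \<le> Bp * (s - c)" using rs by (simp add: Bp_def field_simps)
    also have "\<dots> \<le> Bp * e0" using s Bp0 by (intro mult_left_mono) auto
    finally have i0: "\<bar>I\<bar> / rho s \<le> Bp * e0" .
    have "\<bar>I / rho s\<bar> = \<bar>I\<bar> / rho s" using rs by (simp add: abs_divide)
    moreover have "Bp * e0 = e0 * Bp" by simp
    ultimately have i1: "\<bar>I / rho s\<bar> \<le> \<bar>b\<bar> / 4" using i0 e0b by linarith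
    have "wc / rho s - b = b * (rho c - rho s) / rho s" using rc rs by (simp add: b_def field_simps)
    then have "\<bar>wc / rho s - b\<bar> = \<bar>b\<bar> * (rho s - rho c) / rho s"
      using rcs rs by (simp add: abs_mult abs_divide)
    also have "\<dots> \<le> \<bar>b\<bar> * (rho c / 4) / rho s"
      using rd rs by (intro divide_right_mono mult_left_mono) auto
    also have "\<dots> \<le> \<bar>b\<bar> * (rho s / 4) / rho s"
      using rcs rs by (intro divide_right_mono mult_left_mono) auto
    also have "\<dots> = \<bar>b\<bar> / 4" using rs by simp
    finally have i2: "\<bar>wc / rho s - b\<bar> \<le> \<bar>b\<bar> / 4" .
    have "VV h s = wc / rho s - I / rho s" by (simp add: VV_def NN_def I_def diff_divide_distrib)
    then show ?thesis using i1 i2 by linarith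
  qed
  show ?thesis
  proof (rule that[of D e0 C])
    show "0 < D" "0 < e0" "e0 \<le> 1" "0 \<le> C" "e0 * C \<le> 1 / 2" using e0p e01 C0 e0C' by (auto simp: D_def)
    show "e0 * \<bar>pq (VV f s)\<bar> \<le> D"
      if "c \<le> s" "s \<le> c + e0" "continuous_on {c..s} f" "\<And>\<tau>. \<tau> \<in> {c..s} \<Longrightarrow> \<bar>f \<tau> - a\<bar> \<le> D" for f s
      by (rule B1_gen[OF e0p e01 _ that]) (use e0W in \<open>simp add: D_def Wb_def Bp_def K_def\<close>)
    show "\<bar>pq (VV f s) - pq (VV g s)\<bar> \<le> C * d"
      if s: "c \<le> s" "s \<le> c + e0" and cf: "continuous_on {c..s} f" and cg: "continuous_on {c..s} g"
        and bf: "\<And>\<tau>. \<tau> \<in> {c..s} \<Longrightarrow> \<bar>f \<tau> - a\<bar> \<le> D" and bg: "\<And>\<tau>. \<tau> \<in> {c..s} \<Longrightarrow> \<bar>g \<tau> - a\<bar> \<le> D"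
        and fg: "\<And>\<tau>. \<tau> \<in> {c..s} \<Longrightarrow> \<bar>f \<tau> - g \<tau>\<bar> \<le> d" for f g d s
    proof -
      have d0: "0 \<le> d" using fg[of c] s by auto
      show ?thesis
      proof (cases "s = c")
        case True then show ?thesis using C0 d0 by (simp add: VV_def)
      next
        case False
        then have sc: "c < s" using s by auto
        have vd: "\<bar>VV f s - VV g s\<bar> \<le> (s - c) * (Lp * d)"
          unfolding Lp_def using VV_diff[OF s(1) cf cg, of K d] bf bg fg ball_abs
          by (auto simp: K_def mult.assoc)
        have cf': "\<bar>VV f s - b\<bar> \<le> \<bar>b\<bar> / 2" by (rule close[OF sc s(2) cf bf])
        have cg': "\<bar>VV g s - b\<bar> \<le> \<bar>b\<bar> / 2" by (rule close[OF sc s(2) cg bg])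
        have side: "(m \<le> VV f s \<and> m \<le> VV g s) \<or> (VV f s \<le> - m \<and> VV g s \<le> - m)"
        proof -
          have f1: "b - \<bar>b\<bar> / 2 \<le> VV f s" "VV f s \<le> b + \<bar>b\<bar> / 2"
            using cf' abs_ge_self[of "VV f s - b"] abs_ge_minus_self[of "VV f s - b"] by linarith+
          have g1: "b - \<bar>b\<bar> / 2 \<le> VV g s" "VV g s \<le> b + \<bar>b\<bar> / 2"
            using cg' abs_ge_self[of "VV g s - b"] abs_ge_minus_self[of "VV g s - b"] by linarith+
          show ?thesis
          proof (cases "b > 0")
            case True then show ?thesis using f1 g1 by (simp add: m_def)
          next
            case False then have "b < 0" using b0 by auto
            then show ?thesis using f1 g1 by (simp add: m_def)
          qed
        qed
        have "\<bar>pq (VV f s) - pq (VV g s)\<bar> \<le> al * m powr (al - 1) * \<bar>VV f s - VV g s\<bar>"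
          by (rule pq_lip2[OF m0 side])
        also have "\<dots> \<le> al * m powr (al - 1) * ((s - c) * (Lp * d))"
          using vd al_pos by (intro mult_left_mono) auto
        also have "\<dots> \<le> al * m powr (al - 1) * (1 * (Lp * d))"
          using s e01 al_pos Lp0 d0 by (intro mult_left_mono mult_right_mono) auto
        also have "\<dots> = C * d" by (simp add: C_def)
        finally show ?thesis .
      qed
    qed
  qed
next
  case True
  then have a0: "a \<noteq> 0" using nz by auto
  define D where "D = \<bar>a\<bar> / 2"
  define K where "K = \<bar>a\<bar> + D"
  define Bp where "Bp = K powr (p - 1)"
  define Lp where "Lp = (p - 1) * K powr (p - 2)"
  define m0 where "m0 = (\<bar>a\<bar> / 2) powr (p - 1)"
  define C where "C = al * (m0 / \<theta>) powr (al - 1) * Lp"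
  define e0 where "e0 = min 1 (min (D / (1 + Bp)) (1 / (2 * C + 2)))"
  have D0: "0 < D" using a0 by (simp add: D_def)
  have Bp0: "0 \<le> Bp" by (simp add: Bp_def)
  have Lp0: "0 \<le> Lp" using p2 by (simp add: Lp_def)
  have m00: "0 < m0" using a0 by (simp add: m0_def)
  have C0: "0 \<le> C" using al_pos Lp0 by (simp add: C_def)
  have e0p: "0 < e0" using D0 Bp0 C0 by (simp add: e0_def)
  have e01: "e0 \<le> 1" by (simp add: e0_def)
  have e0W: "e0 * (1 + \<bar>wc\<bar> / rho c + Bp) \<le> D"
  proof -
    have "e0 \<le> D / (1 + Bp)" by (simp add: e0_def)
    then have "e0 * (1 + Bp) \<le> D / (1 + Bp) * (1 + Bp)" using Bp0 by (intro mult_right_mono) auto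
    then show ?thesis using Bp0 True by simp
  qed
  have e0C': "e0 * C \<le> 1 / 2" using C0 by (rule e0C) (simp add: e0_def)
  show ?thesis
  proof (rule that[of D e0 C])
    show "0 < D" "0 < e0" "e0 \<le> 1" "0 \<le> C" "e0 * C \<le> 1 / 2" using D0 e0p e01 C0 e0C' by auto
    show "e0 * \<bar>pq (VV f s)\<bar> \<le> D"
      if "c \<le> s" "s \<le> c + e0" "continuous_on {c..s} f" "\<And>\<tau>. \<tau> \<in> {c..s} \<Longrightarrow> \<bar>f \<tau> - a\<bar> \<le> D" for f s
      by (rule B1_gen[OF e0p e01 _ that]) (use e0W in \<open>simp add: Bp_def K_def\<close>)
    show "\<bar>pq (VV f s) - pq (VV g s)\<bar> \<le> C * d"
      if s: "c \<le> s" "s \<le> c + e0" and cf: "continuous_on {c..s} f" and cg: "continuous_on {c..s} g"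
        and bf: "\<And>\<tau>. \<tau> \<in> {c..s} \<Longrightarrow> \<bar>f \<tau> - a\<bar> \<le> D" and bg: "\<And>\<tau>. \<tau> \<in> {c..s} \<Longrightarrow> \<bar>g \<tau> - a\<bar> \<le> D"
        and fg: "\<And>\<tau>. \<tau> \<in> {c..s} \<Longrightarrow> \<bar>f \<tau> - g \<tau>\<bar> \<le> d" for f g d s
    proof -
      have d0: "0 \<le> d" using fg[of c] s by auto
      show ?thesis
      proof (cases "s = c")
        case True then show ?thesis using C0 d0 by (simp add: VV_def)
      next
        case False
        then have sc: "c < s" using s by auto
        have vd: "\<bar>VV f s - VV g s\<bar> \<le> (s - c) * (Lp * d)"
          unfolding Lp_def using VV_diff[OF s(1) cf cg, of K d] bf bg fg ball_abs
          by (auto simp: K_def mult.assoc)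
        define m where "m = (m0 / \<theta>) * (s - c)"
        have mp: "0 < m" using m00 th1 sc by (simp add: m_def)
        have mm: "m0 * (s - c) / \<theta> = m" by (simp add: m_def)
        have sf: "sgn a * VV f s \<le> - m"
          using sgn_VV[OF True a0 sc cf] bf unfolding D_def m0_def[symmetric] mm by blast
        have sg: "sgn a * VV g s \<le> - m"
          using sgn_VV[OF True a0 sc cg] bg unfolding D_def m0_def[symmetric] mm by blast
        have side: "(m \<le> VV f s \<and> m \<le> VV g s) \<or> (VV f s \<le> - m \<and> VV g s \<le> - m)"
        proof (cases "a > 0")
          case True then show ?thesis using sf sg by auto
        next
          case False then have "a < 0" using a0 by auto
          then show ?thesis using sf sg by auto
        qed
        have "\<bar>pq (VV f s) - pq (VV g s)\<bar> \<le> al * m powr (al - 1) * \<bar>VV f s - VV g s\<bar>"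
          by (rule pq_lip2[OF mp side])
        also have "\<dots> \<le> al * m powr (al - 1) * ((s - c) * (Lp * d))"
          using vd al_pos by (intro mult_left_mono) auto
        also have "\<dots> = al * (m powr (al - 1) * (s - c)) * (Lp * d)" by (simp add: algebra_simps)
        also have "\<dots> \<le> al * (m0 / \<theta>) powr (al - 1) * (Lp * d)"
        proof -
          have "m powr (al - 1) * (s - c) \<le> (m0 / \<theta>) powr (al - 1)"
            unfolding m_def using m00 th1 sc s e01 by (intro powr_aux) auto
          then show ?thesis using al_pos Lp0 d0 by (intro mult_right_mono mult_left_mono) auto
        qed
        also have "\<dots> = C * d" by (simp add: C_def)
        finally show ?thesis .
      qed
    qed
  qed
qed

end

lemma eval_bcontfun_cont: "continuous_on UNIV (\<lambda>f::real \<Rightarrow>\<^sub>C real. apply_bcontfun f x)"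
proof -
  have "1-lipschitz_on UNIV (\<lambda>f::real \<Rightarrow>\<^sub>C real. apply_bcontfun f x)"
    by (rule lipschitz_onI) (auto simp: dist_bounded)
  then show ?thesis by (rule lipschitz_on_continuous_on)
qed

lemma closed_ball_bcontfun: "closed {f::real \<Rightarrow>\<^sub>C real. \<forall>x. \<bar>apply_bcontfun f x - a\<bar> \<le> D}"
proof -
  have "{f::real \<Rightarrow>\<^sub>C real. \<forall>x. \<bar>apply_bcontfun f x - a\<bar> \<le> D} = (\<Inter>x. {f. \<bar>apply_bcontfun f x - a\<bar> \<le> D})"
    by auto
  moreover have "closed {f::real \<Rightarrow>\<^sub>C real. \<bar>apply_bcontfun f x - a\<bar> \<le> D}" for x
    by (intro closed_Collect_le continuous_intros eval_bcontfun_cont)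
  ultimately show ?thesis by auto
qed

lemma clamp_real_in: "c \<le> E \<Longrightarrow> clamp c E (x::real) \<in> {c..E}"
  using clamp_in_interval[of c E x] by (simp add: box_real)

lemma clamp_real_id: "x \<in> {c..E} \<Longrightarrow> clamp c E (x::real) = x"
  using clamp_cancel_cbox[of x c E] by (simp add: box_real)

lemma bcontfun_from_interval:
  fixes F :: "real \<Rightarrow> real"
  assumes "continuous_on {c..E} F"
  shows "(\<lambda>x. F (clamp c E x)) \<in> bcontfun"
proof -
  obtain g :: "real \<Rightarrow>\<^sub>C real" where "\<And>x. g x = F (clamp c E x)"
    using continuous_on_cbox_bcontfunE[of c E F] assms by (auto simp: box_real)
  then have "(\<lambda>x. F (clamp c E x)) = apply_bcontfun g" by auto
  then show ?thesis by (simp add: apply_bcontfun)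
qed

context loc begin

lemma FP:
  assumes nz: "a \<noteq> 0 \<or> wc \<noteq> 0"
  obtains D e0 where "0 < D" "0 < e0"
    "\<And>e. 0 < e \<Longrightarrow> e \<le> e0 \<Longrightarrow> \<exists>u w. intsol c (c + e) u w \<and> u c = a \<and> w c = wc"
    "\<And>e u1 w1 u2 w2. 0 < e \<Longrightarrow> e \<le> e0 \<Longrightarrow>
       intsol c (c + e) u1 w1 \<Longrightarrow> u1 c = a \<Longrightarrow> w1 c = wc \<Longrightarrow> (\<forall>t\<in>{c..c + e}. \<bar>u1 t - a\<bar> \<le> D) \<Longrightarrow>
       intsol c (c + e) u2 w2 \<Longrightarrow> u2 c = a \<Longrightarrow> w2 c = wc \<Longrightarrow> (\<forall>t\<in>{c..c + e}. \<bar>u2 t - a\<bar> \<le> D) \<Longrightarrow>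
       \<forall>t\<in>{c..c + e}. u1 t = u2 t"
proof -
  obtain D e0 C where D: "0 < D" "0 < e0" "e0 \<le> 1" "0 \<le> C" "e0 * C \<le> 1 / 2"
    and B1: "\<And>f s. c \<le> s \<Longrightarrow> s \<le> c + e0 \<Longrightarrow> continuous_on {c..s} f \<Longrightarrow>
        (\<And>\<tau>. \<tau> \<in> {c..s} \<Longrightarrow> \<bar>f \<tau> - a\<bar> \<le> D) \<Longrightarrow> e0 * \<bar>pq (VV f s)\<bar> \<le> D"
    and B2: "\<And>f g d s. c \<le> s \<Longrightarrow> s \<le> c + e0 \<Longrightarrow> continuous_on {c..s} f \<Longrightarrow> continuous_on {c..s} g \<Longrightarrow>
        (\<And>\<tau>. \<tau> \<in> {c..s} \<Longrightarrow> \<bar>f \<tau> - a\<bar> \<le> D) \<Longrightarrow> (\<And>\<tau>. \<tau> \<in> {c..s} \<Longrightarrow> \<bar>g \<tau> - a\<bar> \<le> D) \<Longrightarrow>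
        (\<And>\<tau>. \<tau> \<in> {c..s} \<Longrightarrow> \<bar>f \<tau> - g \<tau>\<bar> \<le> d) \<Longrightarrow> \<bar>pq (VV f s) - pq (VV g s)\<bar> \<le> C * d"
    using core[OF nz] by blast
  define S where "S = {f::real \<Rightarrow>\<^sub>C real. \<forall>x. \<bar>apply_bcontfun f x - a\<bar> \<le> D}"
  have Sc: "complete S" unfolding S_def complete_eq_closed by (rule closed_ball_bcontfun)
  have Sne: "S \<noteq> {}"
  proof -
    have "const_bcontfun a \<in> S" using D by (simp add: S_def const_bcontfun.rep_eq)
    then show ?thesis by auto
  qed
  have main: "\<exists>!x\<in>S. Bcontfun (\<lambda>t. TT (apply_bcontfun x) (clamp c (c + e) t)) = x"
    if e: "0 < e" "e \<le> e0" for e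
  proof -
    define E where "E = c + e"
    have cE: "c \<le> E" using e by (simp add: E_def)
    define Phi where "Phi = (\<lambda>f::real \<Rightarrow>\<^sub>C real. Bcontfun (\<lambda>t. TT (apply_bcontfun f) (clamp c E t)))"
    have Phi_app: "apply_bcontfun (Phi f) t = TT (apply_bcontfun f) (clamp c E t)" for f t
    proof -
      have "(\<lambda>t. TT (apply_bcontfun f) (clamp c E t)) \<in> bcontfun"
        by (intro bcontfun_from_interval TT_cont cE) auto
      then show ?thesis by (simp add: Phi_def Bcontfun_inverse)
    qed
    have ballS: "\<bar>apply_bcontfun f \<tau> - a\<bar> \<le> D" if "f \<in> S" for f \<tau> using that by (simp add: S_def)
    have self: "Phi ` S \<subseteq> S"
    proof
      fix y assume "y \<in> Phi ` S"
      then obtain f where f: "f \<in> S" "y = Phi f" by auto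
      have "\<bar>apply_bcontfun y x - a\<bar> \<le> D" for x
      proof -
        define t where "t = clamp c E x"
        have t: "t \<in> {c..E}" using clamp_real_in[OF cE] by (simp add: t_def)
        have "\<bar>integral {c..t} (\<lambda>s. pq (VV (apply_bcontfun f) s))\<bar> \<le> D / e0 * (t - c)"
        proof (rule int_bound)
          show "c \<le> t" using t by auto
          show "continuous_on {c..t} (\<lambda>s. pq (VV (apply_bcontfun f) s))"
            using t by (intro pqVV_cont) auto
          fix s assume s: "s \<in> {c..t}"
          have "e0 * \<bar>pq (VV (apply_bcontfun f) s)\<bar> \<le> D"
            using s t e by (intro B1 ballS[OF f(1)]) (auto simp: E_def)
          then show "\<bar>pq (VV (apply_bcontfun f) s)\<bar> \<le> D / e0" using D by (simp add: field_simps)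
        qed
        also have "\<dots> \<le> D / e0 * e0" using t e D by (intro mult_left_mono) (auto simp: E_def)
        also have "\<dots> = D" using D by simp
        finally show ?thesis using f(2) by (simp add: Phi_app TT_def t_def)
      qed
      then show "y \<in> S" by (simp add: S_def)
    qed
    have lip: "dist (Phi f) (Phi g) \<le> 1 / 2 * dist f g" if "f \<in> S" "g \<in> S" for f g
    proof (rule dist_bound)
      fix x
      define t where "t = clamp c E x"
      have t: "t \<in> {c..E}" using clamp_real_in[OF cE] by (simp add: t_def)
      have cf: "continuous_on {c..t} (\<lambda>s. pq (VV (apply_bcontfun f) s))"
        and cg: "continuous_on {c..t} (\<lambda>s. pq (VV (apply_bcontfun g) s))"
        using t by (auto intro!: pqVV_cont)
      have "\<bar>integral {c..t} (\<lambda>s. pq (VV (apply_bcontfun f) s) - pq (VV (apply_bcontfun g) s))\<bar>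
            \<le> C * dist f g * (t - c)"
      proof (rule int_bound)
        show "c \<le> t" using t by auto
        show "continuous_on {c..t} (\<lambda>s. pq (VV (apply_bcontfun f) s) - pq (VV (apply_bcontfun g) s))"
          using cf cg by (rule continuous_on_diff)
        fix s assume s: "s \<in> {c..t}"
        show "\<bar>pq (VV (apply_bcontfun f) s) - pq (VV (apply_bcontfun g) s)\<bar> \<le> C * dist f g"
          using s t e
          by (intro B2 ballS that) (auto simp: E_def dist_real_def[symmetric] dist_bounded)
      qed
      also have "\<dots> \<le> C * dist f g * e0"
        using t e D by (intro mult_left_mono) (auto simp: E_def)
      also have "\<dots> = (e0 * C) * dist f g" by simp
      also have "\<dots> \<le> 1 / 2 * dist f g" using D by (intro mult_right_mono) auto
      finally have "\<bar>integral {c..t} (\<lambda>s. pq (VV (apply_bcontfun f) s) - pq (VV (apply_bcontfun g) s))\<bar>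
            \<le> 1 / 2 * dist f g" .
      moreover have "integral {c..t} (\<lambda>s. pq (VV (apply_bcontfun f) s) - pq (VV (apply_bcontfun g) s))
          = TT (apply_bcontfun f) t - TT (apply_bcontfun g) t"
        unfolding TT_def
        using integral_diff[OF integrable_continuous_interval[OF cf] integrable_continuous_interval[OF cg]]
        by simp
      ultimately show "dist (Phi f x) (Phi g x) \<le> 1 / 2 * dist f g"
        by (simp add: Phi_app dist_real_def t_def)
    qed
    have "\<exists>!x\<in>S. Phi x = x"
      by (rule Banach_fix[OF Sc Sne _ _ self lip]) auto
    then show ?thesis by (simp add: Phi_def E_def)
  qed
  show ?thesis
  proof (rule that[OF D(1) D(2)])
    fix e assume e: "0 < e" "e \<le> e0"
    obtain x where x: "x \<in> S" "Bcontfun (\<lambda>t. TT (apply_bcontfun x) (clamp c (c + e) t)) = x"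
      using main[OF e] by blast
    define u where "u = apply_bcontfun x"
    have cE: "c \<le> c + e" using e by simp
    have memb: "(\<lambda>t. TT u (clamp c (c + e) t)) \<in> bcontfun"
      by (intro bcontfun_from_interval TT_cont cE) (auto simp: u_def)
    have ufix: "u t = TT u (clamp c (c + e) t)" for t
      using arg_cong[OF x(2), of apply_bcontfun] memb by (simp add: Bcontfun_inverse u_def fun_eq_iff)
    have uT: "u t = TT u t" if "t \<in> {c..c + e}" for t
      using ufix[of t] clamp_real_id[OF that] by simp
    have uc: "u c = a" using uT[of c] cE by simp
    have "intsol c (c + e) u (NN u)"
      unfolding intsol_def
    proof (intro conjI ballI)
      show "continuous_on {c..c + e} u" by (simp add: u_def)
      show "continuous_on {c..c + e} (\<lambda>s. pq (NN u s / rho s))"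
        using pqVV_cont[OF cE, of u] by (simp add: VV_def u_def)
      fix t assume t: "t \<in> {c..c + e}"
      show "u t = u c + integral {c..t} (\<lambda>s. pq (NN u s / rho s))"
        using uT[OF t] uc by (simp add: TT_def VV_def)
      show "NN u t = NN u c - integral {c..t} (\<lambda>s. rho s * ph (u s))"
        by (simp add: NN_def)
    qed
    then show "\<exists>u w. intsol c (c + e) u w \<and> u c = a \<and> w c = wc"
      using uc NN_c[of u] by blast
  next
    fix e u1 w1 u2 w2
    assume e: "0 < e" "e \<le> e0"
      and s1: "intsol c (c + e) u1 w1" "u1 c = a" "w1 c = wc" "\<forall>t\<in>{c..c + e}. \<bar>u1 t - a\<bar> \<le> D"
      and s2: "intsol c (c + e) u2 w2" "u2 c = a" "w2 c = wc" "\<forall>t\<in>{c..c + e}. \<bar>u2 t - a\<bar> \<le> D"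
    have cE: "c \<le> c + e" using e by simp
    have conv: "Bcontfun (\<lambda>t. ui (clamp c (c + e) t)) \<in> S \<and>
       Bcontfun (\<lambda>t. TT (apply_bcontfun (Bcontfun (\<lambda>t. ui (clamp c (c + e) t)))) (clamp c (c + e) t))
         = Bcontfun (\<lambda>t. ui (clamp c (c + e) t)) \<and>
       apply_bcontfun (Bcontfun (\<lambda>t. ui (clamp c (c + e) t))) = (\<lambda>t. ui (clamp c (c + e) t))"
      if si: "intsol c (c + e) ui wi" "ui c = a" "wi c = wc" "\<forall>t\<in>{c..c + e}. \<bar>ui t - a\<bar> \<le> D" for ui wi
    proof -
      have cu: "continuous_on {c..c + e} ui" using si(1) by (simp add: intsol_def)
      have memb: "(\<lambda>t. ui (clamp c (c + e) t)) \<in> bcontfun" by (rule bcontfun_from_interval[OF cu])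
      define g where "g = (\<lambda>t. ui (clamp c (c + e) t))"
      have gapp: "apply_bcontfun (Bcontfun g) = g" using memb unfolding g_def by (rule Bcontfun_inverse)
      have geq: "g t = ui t" if "t \<in> {c..c + e}" for t using clamp_real_id[OF that] by (simp add: g_def)
      have inS: "Bcontfun g \<in> S"
        unfolding S_def mem_Collect_eq gapp using si(4) clamp_real_in[OF cE] by (simp add: g_def)
      have TTg: "TT g t = ui t" if t: "t \<in> {c..c + e}" for t
      proof -
        have "VV g s = wi s / rho s" if s: "s \<in> {c..t}" for s
        proof -
          have "integral {c..s} (\<lambda>\<tau>. rho \<tau> * ph (g \<tau>)) = integral {c..s} (\<lambda>\<tau>. rho \<tau> * ph (ui \<tau>))"
            using s t by (intro integral_cong) (simp add: geq)
          moreover have "wi s = wi c - integral {c..s} (\<lambda>\<tau>. rho \<tau> * ph (ui \<tau>))"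
          proof -
            have s': "s \<in> {c..c + e}" using s t by auto
            then show ?thesis using si(1) unfolding intsol_def by blast
          qed
          ultimately show ?thesis using si(3) unfolding VV_def NN_def by simp
        qed
        then have "integral {c..t} (\<lambda>s. pq (VV g s)) = integral {c..t} (\<lambda>s. pq (wi s / rho s))"
          by (intro integral_cong) simp
        moreover have "ui t = ui c + integral {c..t} (\<lambda>s. pq (wi s / rho s))"
          using si(1) t unfolding intsol_def by blast
        ultimately show ?thesis using si(2) unfolding TT_def by simp
      qed
      have "(\<lambda>t. TT g (clamp c (c + e) t)) = g"
      proof
        fix t
        have "clamp c (c + e) t \<in> {c..c + e}" by (rule clamp_real_in[OF cE])
        then show "TT g (clamp c (c + e) t) = g t" using TTg unfolding g_def by blast
      qed
      then have "Bcontfun (\<lambda>t. TT (apply_bcontfun (Bcontfun g)) (clamp c (c + e) t)) = Bcontfun g"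
        unfolding gapp by simp
      then show ?thesis using inS gapp unfolding g_def by blast
    qed
    note c1 = conv[OF s1] and c2 = conv[OF s2]
    have "Bcontfun (\<lambda>t. u1 (clamp c (c + e) t)) = Bcontfun (\<lambda>t. u2 (clamp c (c + e) t))"
      using main[OF e] c1 c2 by blast
    then have "apply_bcontfun (Bcontfun (\<lambda>t. u1 (clamp c (c + e) t))) = apply_bcontfun (Bcontfun (\<lambda>t. u2 (clamp c (c + e) t)))"
      by simp
    then have eq: "(\<lambda>t. u1 (clamp c (c + e) t)) = (\<lambda>t. u2 (clamp c (c + e) t))"
      using c1 c2 by simp
    show "\<forall>t\<in>{c..c + e}. u1 t = u2 t"
    proof
      fix t assume t: "t \<in> {c..c + e}"
      have "u1 (clamp c (c + e) t) = u2 (clamp c (c + e) t)" using eq by metis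
      then show "u1 t = u2 t" using clamp_real_id[OF t] by simp
    qed
  qed
qed

end

context hl begin

lemma is_loc: "0 \<le> c \<Longrightarrow> (rho c = 0 \<Longrightarrow> wc = 0) \<Longrightarrow> loc p \<theta> c wc"
  by (intro loc.intro loc_axioms.intro hl_axioms) auto

lemma intsol_zero: "intsol c d (\<lambda>_. 0) (\<lambda>_. 0)"
  by (simp add: intsol_def)

lemma LEX:
  assumes c: "0 \<le> c" "rho c = 0 \<Longrightarrow> wc = 0"
  shows "\<exists>e>0. \<exists>u w. intsol c (c + e) u w \<and> u c = a \<and> w c = wc"
proof (cases "a = 0 \<and> wc = 0")
  case True
  have "intsol c (c + 1) (\<lambda>_. 0) (\<lambda>_. 0)" by (rule intsol_zero)
  then have "\<exists>u w. intsol c (c + 1) u w \<and> u c = a \<and> w c = wc" using True by blast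
  then show ?thesis by (intro exI[of _ "1::real"] conjI) simp_all
next
  case False
  interpret L: loc p \<theta> c a wc by (rule is_loc[OF c])
  have nz: "a \<noteq> 0 \<or> wc \<noteq> 0" using False by simp
  obtain D e0 where D: "0 < D" "0 < e0"
    and E: "\<And>e. 0 < e \<Longrightarrow> e \<le> e0 \<Longrightarrow> \<exists>u w. intsol c (c + e) u w \<and> u c = a \<and> w c = wc"
    and "\<And>e u1 w1 u2 w2. 0 < e \<Longrightarrow> e \<le> e0 \<Longrightarrow>
       intsol c (c + e) u1 w1 \<Longrightarrow> u1 c = a \<Longrightarrow> w1 c = wc \<Longrightarrow> (\<forall>t\<in>{c..c + e}. \<bar>u1 t - a\<bar> \<le> D) \<Longrightarrow>
       intsol c (c + e) u2 w2 \<Longrightarrow> u2 c = a \<Longrightarrow> w2 c = wc \<Longrightarrow> (\<forall>t\<in>{c..c + e}. \<bar>u2 t - a\<bar> \<le> D) \<Longrightarrow>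
       \<forall>t\<in>{c..c + e}. u1 t = u2 t"
    by (rule L.FP[OF nz]) (rule that; assumption)
  have "\<exists>u w. intsol c (c + e0) u w \<and> u c = a \<and> w c = wc" by (rule E[OF D(2) order_refl])
  then show ?thesis using D(2) by (intro exI[of _ e0] conjI)
qed

lemma LUN:
  assumes S1: "sol c d u1 w1" and S2: "sol c d u2 w2" and c: "0 \<le> c" "c < d"
    and eq: "u1 c = u2 c" "w1 c = w2 c" and w0: "rho c = 0 \<Longrightarrow> w1 c = 0"
  shows "\<exists>e>0. \<forall>t\<in>{c..min d (c + e)}. u1 t = u2 t \<and> w1 t = w2 t"
proof (cases "u1 c = 0 \<and> w1 c = 0")
  case True
  have "u1 t = u2 t \<and> w1 t = w2 t" if "t \<in> {c..d}" for t
  proof -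
    have "u1 t = 0 \<and> w1 t = 0" by (rule sol_zero[OF S1 c(1) _ _ that]) (use True in simp_all)
    moreover have "u2 t = 0 \<and> w2 t = 0" by (rule sol_zero[OF S2 c(1) _ _ that]) (use True eq in simp_all)
    ultimately show ?thesis by simp
  qed
  then have "\<forall>t\<in>{c..min d (c + 1)}. u1 t = u2 t \<and> w1 t = w2 t" by simp
  then show ?thesis by (intro exI[of _ "1::real"] conjI) simp_all
next
  case False
  define a where "a = u1 c"
  define wc where "wc = w1 c"
  have w0': "rho c = 0 \<Longrightarrow> wc = 0" using w0 by (simp add: wc_def)
  interpret L: loc p \<theta> c a wc by (rule is_loc[OF c(1) w0'])
  have nz: "a \<noteq> 0 \<or> wc \<noteq> 0" using False by (simp add: a_def wc_def)
  obtain D e0 where D: "0 < D" "0 < e0"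
    and "\<And>e. 0 < e \<Longrightarrow> e \<le> e0 \<Longrightarrow> \<exists>u w. intsol c (c + e) u w \<and> u c = a \<and> w c = wc"
    and U: "\<And>e u1 w1 u2 w2. 0 < e \<Longrightarrow> e \<le> e0 \<Longrightarrow>
       intsol c (c + e) u1 w1 \<Longrightarrow> u1 c = a \<Longrightarrow> w1 c = wc \<Longrightarrow> (\<forall>t\<in>{c..c + e}. \<bar>u1 t - a\<bar> \<le> D) \<Longrightarrow>
       intsol c (c + e) u2 w2 \<Longrightarrow> u2 c = a \<Longrightarrow> w2 c = wc \<Longrightarrow> (\<forall>t\<in>{c..c + e}. \<bar>u2 t - a\<bar> \<le> D) \<Longrightarrow>
       \<forall>t\<in>{c..c + e}. u1 t = u2 t"
    by (rule L.FP[OF nz]) (rule that; assumption)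
  have cont_near: "\<exists>\<delta>>0. \<forall>t\<in>{c..d}. dist t c < \<delta> \<longrightarrow> dist (u t) (u c) < D"
    if "continuous_on {c..d} u" for u
  proof -
    have cc: "c \<in> {c..d}" using c by simp
    have "\<forall>\<epsilon>>0. \<exists>\<delta>>0. \<forall>x'\<in>{c..d}. dist x' c < \<delta> \<longrightarrow> dist (u x') (u c) < \<epsilon>"
      using that cc unfolding continuous_on_iff by blast
    then show ?thesis using D(1) by blast
  qed
  obtain \<delta>1 where d1: "\<delta>1 > 0" "\<forall>t\<in>{c..d}. dist t c < \<delta>1 \<longrightarrow> dist (u1 t) (u1 c) < D"
    using cont_near[OF sol_cont_u[OF S1]] by blast
  obtain \<delta>2 where d2: "\<delta>2 > 0" "\<forall>t\<in>{c..d}. dist t c < \<delta>2 \<longrightarrow> dist (u2 t) (u2 c) < D"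
    using cont_near[OF sol_cont_u[OF S2]] by blast
  define e where "e = min (min e0 (d - c)) (min (\<delta>1 / 2) (\<delta>2 / 2))"
  have e: "0 < e" "e \<le> e0" "c + e \<le> d" "e < \<delta>1" "e < \<delta>2"
    using D d1(1) d2(1) c unfolding e_def by linarith+
  have sub1: "sol c (c + e) u1 w1" by (rule sol_subset[OF S1]) (use e in linarith)+
  have sub2: "sol c (c + e) u2 w2" by (rule sol_subset[OF S2]) (use e in linarith)+
  have I1: "intsol c (c + e) u1 w1"
    by (rule D2I[OF sub1 c(1)]) (use e w0 in simp_all)
  have I2: "intsol c (c + e) u2 w2"
    by (rule D2I[OF sub2 c(1)]) (use e w0 eq in simp_all)
  have bb: "\<bar>ui t - ui c\<bar> \<le> D"
    if di: "\<forall>t\<in>{c..d}. dist t c < \<delta>i \<longrightarrow> dist (ui t) (ui c) < D" and ei: "e < \<delta>i"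
      and t: "t \<in> {c..c + e}" for ui \<delta>i t
  proof -
    have "t \<in> {c..d}" using t e by simp
    moreover have "dist t c < \<delta>i" using t ei by (simp add: dist_real_def)
    ultimately have "dist (ui t) (ui c) < D" using di by blast
    then show ?thesis by (simp add: dist_real_def)
  qed
  have b1: "\<forall>t\<in>{c..c + e}. \<bar>u1 t - a\<bar> \<le> D"
    using bb[OF d1(2) e(4)] by (simp add: a_def)
  have b2: "\<forall>t\<in>{c..c + e}. \<bar>u2 t - a\<bar> \<le> D"
    using bb[OF d2(2) e(5)] eq by (simp add: a_def)
  have ueq: "\<forall>t\<in>{c..c + e}. u1 t = u2 t"
    by (rule U[OF e(1,2) I1 _ _ b1 I2 _ _ b2]) (use eq in \<open>simp_all add: a_def wc_def\<close>)
  have weq: "w1 t = w2 t" if t: "t \<in> {c..c + e}" for t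
  proof -
    have "w1 t = w1 c - integral {c..t} (\<lambda>s. rho s * ph (u1 s))"
      using I1 t unfolding intsol_def by blast
    moreover have "w2 t = w2 c - integral {c..t} (\<lambda>s. rho s * ph (u2 s))"
      using I2 t unfolding intsol_def by blast
    moreover have "integral {c..t} (\<lambda>s. rho s * ph (u1 s)) = integral {c..t} (\<lambda>s. rho s * ph (u2 s))"
    proof (rule integral_cong)
      fix s assume "s \<in> {c..t}"
      then have "s \<in> {c..c + e}" using t by simp
      then show "rho s * ph (u1 s) = rho s * ph (u2 s)" using ueq by simp
    qed
    ultimately show ?thesis using eq by simp
  qed
  have mn: "min d (c + e) = c + e" using e by simp
  have "\<forall>t\<in>{c..min d (c + e)}. u1 t = u2 t \<and> w1 t = w2 t"
    unfolding mn using ueq weq by blast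
  then show ?thesis using e(1) by blast
qed

lemma GUN:
  assumes S1: "sol c d u1 w1" and S2: "sol c d u2 w2" and c: "0 \<le> c" "c \<le> d"
    and eq: "u1 c = u2 c" "w1 c = w2 c" and w0: "rho c = 0 \<Longrightarrow> w1 c = 0"
  shows "\<forall>t\<in>{c..d}. u1 t = u2 t \<and> w1 t = w2 t"
proof -
  define ag where "ag t \<longleftrightarrow> u1 t = u2 t \<and> w1 t = w2 t" for t
  define A where "A = {t \<in> {c..d}. \<forall>s\<in>{c..t}. ag s}"
  have cA: "c \<in> A" using c eq by (auto simp: A_def ag_def)
  have bA: "bdd_above A" by (auto simp: A_def bdd_above_def)
  define T where "T = Sup A"
  have cT: "c \<le> T" using cSup_upper[OF cA bA] by (simp add: T_def)
  have Td: "T \<le> d" using cA by (auto simp: T_def A_def intro!: cSup_least)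
  have below: "ag s" if "c \<le> s" "s < T" for s
  proof -
    have "s < Sup A" using that(2) by (simp add: T_def)
    then obtain t where "t \<in> A" "s < t" using less_cSupE[of s A] cA by blast
    then show ?thesis using that by (auto simp: A_def)
  qed
  have agT: "ag T"
  proof (cases "T = c")
    case True then show ?thesis using eq by (simp add: ag_def)
  next
    case False
    then have cT': "c < T" using cT by auto
    define Z where "Z = {t \<in> {c..d}. (\<lambda>t. (u1 t - u2 t, w1 t - w2 t)) t = (0, 0)}"
    have clZ: "closed Z" unfolding Z_def
      by (intro continuous_closed_preimage_constant continuous_on_Pair continuous_on_diff
          sol_cont_u[OF S1] sol_cont_u[OF S2] sol_cont_w[OF S1] sol_cont_w[OF S2]) auto
    have subZ: "{c..<T} \<subseteq> Z" using below Td by (auto simp: Z_def ag_def)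
    have "closure {c..<T} \<subseteq> Z" by (rule closure_minimal[OF subZ clZ])
    then have "T \<in> Z" using cT' by auto
    then show ?thesis by (simp add: Z_def ag_def)
  qed
  have TA: "T \<in> A" using below agT cT Td by (auto simp: A_def le_less)
  have "T = d"
  proof (rule ccontr)
    assume "T \<noteq> d"
    then have Td': "T < d" using Td by auto
    have S1': "sol T d u1 w1" by (rule sol_subset[OF S1]) (use cT in auto)
    have S2': "sol T d u2 w2" by (rule sol_subset[OF S2]) (use cT in auto)
    have w0': "rho T = 0 \<Longrightarrow> w1 T = 0"
    proof -
      assume "rho T = 0"
      then have "T = 0" using rho_zero[of T] cT c by auto
      then have "T = c" using cT c by auto
      then show "w1 T = 0" using w0 \<open>rho T = 0\<close> by simp
    qed
    obtain e where e: "e > 0" "\<forall>t\<in>{T..min d (T + e)}. u1 t = u2 t \<and> w1 t = w2 t"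
      using LUN[OF S1' S2' _ Td' _ _ w0'] cT c agT by (auto simp: ag_def)
    define T' where "T' = min d (T + e)"
    have "T' \<in> A"
    proof -
      have "ag s" if "s \<in> {c..T'}" for s
      proof (cases "s \<le> T")
        case True then show ?thesis using TA that by (auto simp: A_def)
      next
        case False then show ?thesis using e that by (auto simp: ag_def T'_def)
      qed
      moreover have "T' \<in> {c..d}" using cT Td' e by (auto simp: T'_def)
      ultimately show ?thesis by (auto simp: A_def)
    qed
    then have "T' \<le> T" using cSup_upper[OF _ bA] by (simp add: T_def)
    moreover have "T < T'" using Td' e by (auto simp: T'_def)
    ultimately show False by simp
  qed
  then show ?thesis using TA by (auto simp: A_def ag_def)
qed

end

lemma glue_cont:
  fixes f g :: "real \<Rightarrow> real"
  assumes "c \<le> m" "m \<le> d" "continuous_on {c..m} f" "continuous_on {m..d} g" "f m = g m"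
  shows "continuous_on {c..d} (\<lambda>t. if t \<le> m then f t else g t)"
proof -
  have 1: "continuous_on {c..m} (\<lambda>t. if t \<le> m then f t else g t)"
    using assms(3) by (rule continuous_on_eq) auto
  have 2: "continuous_on {m..d} (\<lambda>t. if t \<le> m then f t else g t)"
    using assms(4) by (rule continuous_on_eq) (use assms(5) in auto)
  have "continuous_on ({c..m} \<union> {m..d}) (\<lambda>t. if t \<le> m then f t else g t)"
    by (rule continuous_on_closed_Un[OF _ _ 1 2]) auto
  moreover have "{c..m} \<union> {m..d} = {c..d}" using assms by auto
  ultimately show ?thesis by simp
qed

lemma cont_agree_end:
  fixes f g :: "real \<Rightarrow> real"
  assumes "a < b" "continuous_on {a..b} f" "continuous_on {a..b} g" "\<And>t. t \<in> {a..<b} \<Longrightarrow> f t = g t"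
  shows "f b = g b"
proof -
  define Z where "Z = {t \<in> {a..b}. (\<lambda>t. f t - g t) t = 0}"
  have clZ: "closed Z" unfolding Z_def
    by (intro continuous_closed_preimage_constant continuous_on_diff assms) auto
  have subZ: "{a..<b} \<subseteq> Z" using assms(4) by (auto simp: Z_def)
  have "closure {a..<b} \<subseteq> Z" by (rule closure_minimal[OF subZ clZ])
  then have "b \<in> Z" using assms(1) by auto
  then show ?thesis by (simp add: Z_def)
qed

context hl begin

lemma GLUE:
  assumes I1: "intsol c m u1 w1" and I2: "intsol m d u2 w2" and cm: "c \<le> m" "m \<le> d" and c0: "0 \<le> c"
    and eu: "u1 m = u2 m" and ew: "w1 m = w2 m"
  shows "intsol c d (\<lambda>t. if t \<le> m then u1 t else u2 t) (\<lambda>t. if t \<le> m then w1 t else w2 t)"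
    (is "intsol c d ?u ?w")
proof -
  have cu1: "continuous_on {c..m} u1" and cp1: "continuous_on {c..m} (\<lambda>s. pq (w1 s / rho s))"
    using I1 unfolding intsol_def by auto
  have cu2: "continuous_on {m..d} u2" and cp2: "continuous_on {m..d} (\<lambda>s. pq (w2 s / rho s))"
    using I2 unfolding intsol_def by auto
  have iu1: "\<And>t. t \<in> {c..m} \<Longrightarrow> u1 t = u1 c + integral {c..t} (\<lambda>s. pq (w1 s / rho s))"
   and iw1: "\<And>t. t \<in> {c..m} \<Longrightarrow> w1 t = w1 c - integral {c..t} (\<lambda>s. rho s * ph (u1 s))"
    using I1 unfolding intsol_def by blast+
  have iu2: "\<And>t. t \<in> {m..d} \<Longrightarrow> u2 t = u2 m + integral {m..t} (\<lambda>s. pq (w2 s / rho s))"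
   and iw2: "\<And>t. t \<in> {m..d} \<Longrightarrow> w2 t = w2 m - integral {m..t} (\<lambda>s. rho s * ph (u2 s))"
    using I2 unfolding intsol_def by blast+
  have cu: "continuous_on {c..d} ?u" by (rule glue_cont[OF cm cu1 cu2 eu])
  have cp: "continuous_on {c..d} (\<lambda>s. pq (?w s / rho s))"
  proof -
    have "continuous_on {c..d} (\<lambda>t. if t \<le> m then pq (w1 t / rho t) else pq (w2 t / rho t))"
      by (rule glue_cont[OF cm cp1 cp2]) (simp add: ew)
    then show ?thesis by (rule continuous_on_eq) auto
  qed
  have cr: "continuous_on {c..d} (\<lambda>s. rho s * ph (?u s))" if "0 \<le> c"
    by (intro continuous_on_mult rho_cont_sub[OF that] cont_ph_comp cu)
  have uc: "?u c = u1 c" and wc: "?w c = w1 c" using cm by auto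
  have int_u: "?u t = ?u c + integral {c..t} (\<lambda>s. pq (?w s / rho s))" if t: "t \<in> {c..d}" for t
  proof (cases "t \<le> m")
    case True
    have "integral {c..t} (\<lambda>s. pq (?w s / rho s)) = integral {c..t} (\<lambda>s. pq (w1 s / rho s))"
      using True by (intro integral_cong) auto
    then show ?thesis using iu1[of t] True t uc by simp
  next
    case False
    have i1: "integral {c..m} (\<lambda>s. pq (?w s / rho s)) = integral {c..m} (\<lambda>s. pq (w1 s / rho s))"
      by (intro integral_cong) auto
    have i2: "integral {m..t} (\<lambda>s. pq (?w s / rho s)) = integral {m..t} (\<lambda>s. pq (w2 s / rho s))"
      by (intro integral_cong) (auto simp: ew)
    have integ: "(\<lambda>s. pq (?w s / rho s)) integrable_on {c..t}"
      by (rule integrable_continuous_interval, rule continuous_on_subset[OF cp]) (use t in auto)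
    have comb: "integral {c..m} (\<lambda>s. pq (?w s / rho s)) + integral {m..t} (\<lambda>s. pq (?w s / rho s))
        = integral {c..t} (\<lambda>s. pq (?w s / rho s))"
      using Henstock_Kurzweil_Integration.integral_combine[OF cm(1) _ integ] False by simp
    have "?u t = u2 t" using False by simp
    also have "\<dots> = u2 m + integral {m..t} (\<lambda>s. pq (w2 s / rho s))" using iu2[of t] False t by simp
    also have "u2 m = u1 c + integral {c..m} (\<lambda>s. pq (w1 s / rho s))" using iu1[of m] cm eu by simp
    finally show ?thesis using i1 i2 comb uc by simp
  qed
  have int_w: "?w t = ?w c - integral {c..t} (\<lambda>s. rho s * ph (?u s))" if t: "t \<in> {c..d}" and c0: "0 \<le> c" for t
  proof (cases "t \<le> m")
    case True
    have "integral {c..t} (\<lambda>s. rho s * ph (?u s)) = integral {c..t} (\<lambda>s. rho s * ph (u1 s))"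
      using True by (intro integral_cong) auto
    then show ?thesis using iw1[of t] True t wc by simp
  next
    case False
    have i1: "integral {c..m} (\<lambda>s. rho s * ph (?u s)) = integral {c..m} (\<lambda>s. rho s * ph (u1 s))"
      by (intro integral_cong) auto
    have i2: "integral {m..t} (\<lambda>s. rho s * ph (?u s)) = integral {m..t} (\<lambda>s. rho s * ph (u2 s))"
      by (intro integral_cong) (auto simp: eu)
    have integ: "(\<lambda>s. rho s * ph (?u s)) integrable_on {c..t}"
      by (rule integrable_continuous_interval, rule continuous_on_subset[OF cr[OF c0]]) (use t in auto)
    have comb: "integral {c..m} (\<lambda>s. rho s * ph (?u s)) + integral {m..t} (\<lambda>s. rho s * ph (?u s))
        = integral {c..t} (\<lambda>s. rho s * ph (?u s))"
      using Henstock_Kurzweil_Integration.integral_combine[OF cm(1) _ integ] False by simp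
    have "?w t = w2 t" using False by simp
    also have "\<dots> = w2 m - integral {m..t} (\<lambda>s. rho s * ph (u2 s))" using iw2[of t] False t by simp
    also have "w2 m = w1 c - integral {c..m} (\<lambda>s. rho s * ph (u1 s))" using iw1[of m] cm ew by simp
    finally show ?thesis using i1 i2 comb wc by simp
  qed
  show ?thesis
    unfolding intsol_def
  proof (intro conjI ballI)
    show "continuous_on {c..d} ?u" by (rule cu)
    show "continuous_on {c..d} (\<lambda>s. pq (?w s / rho s))" by (rule cp)
    fix t assume t: "t \<in> {c..d}"
    show "?u t = ?u c + integral {c..t} (\<lambda>s. pq (?w s / rho s))" by (rule int_u[OF t])
    show "?w t = ?w c - integral {c..t} (\<lambda>s. rho s * ph (?u s))" by (rule int_w[OF t c0])
  qed
qed

lemma sol_intsol_data: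
  assumes "0 \<le> r0" "r0 \<le> R" "sol r0 R u w" "rho r0 = 0 \<Longrightarrow> w r0 = 0"
  shows "\<exists>e>0. \<exists>u' w'. sol r0 (R + e) u' w' \<and> u' r0 = u r0 \<and> w' r0 = w r0"
proof -
  have wR: "rho R = 0 \<Longrightarrow> w R = 0"
  proof -
    assume "rho R = 0"
    then have "R = 0" using rho_zero[of R] assms by auto
    then have "R = r0" using assms by auto
    then show "w R = 0" using assms(4) \<open>rho R = 0\<close> by simp
  qed
  obtain e u2 w2 where e: "e > 0" "intsol R (R + e) u2 w2" "u2 R = u R" "w2 R = w R"
    using LEX[of R "w R" "u R"] assms wR by auto
  have I1: "intsol r0 R u w" by (rule D2I[OF assms(3,1,2,4)])
  have I3: "intsol r0 (R + e) (\<lambda>t. if t \<le> R then u t else u2 t) (\<lambda>t. if t \<le> R then w t else w2 t)"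
    by (rule GLUE[OF I1 e(2)]) (use e assms in auto)
  have "sol r0 (R + e) (\<lambda>t. if t \<le> R then u t else u2 t) (\<lambda>t. if t \<le> R then w t else w2 t)"
    by (rule I2D[OF I3 assms(1)])
  moreover have "(\<lambda>t. if t \<le> R then u t else u2 t) r0 = u r0" "(\<lambda>t. if t \<le> R then w t else w2 t) r0 = w r0"
    using assms(2) by auto
  ultimately show ?thesis using e(1) by blast
qed

end

context hl begin

lemma GEX:
  assumes r0: "0 \<le> r0" and w0: "rho r0 = 0 \<Longrightarrow> w0 = 0"
  shows "\<forall>R\<ge>r0. \<exists>u w. sol r0 R u w \<and> u r0 = h0 \<and> w r0 = w0"
proof (rule ccontr)
  define P where "P R \<longleftrightarrow> r0 \<le> R \<and> (\<exists>u w. sol r0 R u w \<and> u r0 = h0 \<and> w r0 = w0)" for R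
  assume "\<not> (\<forall>R\<ge>r0. \<exists>u w. sol r0 R u w \<and> u r0 = h0 \<and> w r0 = w0)"
  then obtain R1 where R1: "r0 \<le> R1" "\<not> P R1" by (auto simp: P_def)
  have down: "P R'" if PR: "P R" "r0 \<le> R'" "R' \<le> R" for R R'
  proof -
    obtain u w where uw: "sol r0 R u w" "u r0 = h0" "w r0 = w0" using PR(1) unfolding P_def by blast
    have "sol r0 R' u w" by (rule sol_subset[OF uw(1)]) (use PR in auto)
    then show ?thesis using PR uw unfolding P_def by blast
  qed
  define A where "A = {R. P R}"
  have ltR1: "R < R1" if "R \<in> A" for R
  proof (rule ccontr)
    assume "\<not> R < R1"
    then have "P R1" using down[of R R1] that R1 by (auto simp: A_def)
    then show False using R1 by simp
  qed
  have bA: "bdd_above A" using ltR1 by (auto simp: bdd_above_def intro: less_imp_le)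
  obtain e1 u1 w1 where e1: "e1 > 0" "intsol r0 (r0 + e1) u1 w1" "u1 r0 = h0" "w1 r0 = w0"
    using LEX[OF r0 w0, of h0] by blast
  have "P (r0 + e1)" using I2D[OF e1(2) r0] e1 by (auto simp: P_def)
  then have eA: "r0 + e1 \<in> A" by (simp add: A_def)
  define T where "T = Sup A"
  have r0T: "r0 < T" using cSup_upper[OF eA bA] e1(1) by (simp add: T_def)
  have AT: "R \<le> T" if "R \<in> A" for R using cSup_upper[OF that bA] by (simp add: T_def)
  have TR1: "T \<le> R1" unfolding T_def using eA ltR1 by (intro cSup_least) (auto intro: less_imp_le)
  have exA: "\<exists>R\<in>A. t < R" if "t < T" for t
    using less_cSupE[of t A] that eA by (auto simp: T_def)
  define sel where "sel R = (SOME uw. sol r0 R (fst uw) (snd uw) \<and> fst uw r0 = h0 \<and> snd uw r0 = w0)" for R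
  have selP: "sol r0 R (fst (sel R)) (snd (sel R)) \<and> fst (sel R) r0 = h0 \<and> snd (sel R) r0 = w0"
    if RA: "R \<in> A" for R
  proof -
    obtain u w where "sol r0 R u w" "u r0 = h0" "w r0 = w0" using RA unfolding A_def P_def by blast
    then have "\<exists>uw. sol r0 R (fst uw) (snd uw) \<and> fst uw r0 = h0 \<and> snd uw r0 = w0"
      by (intro exI[of _ "(u, w)"]) simp
    then show ?thesis unfolding sel_def by (rule someI_ex)
  qed
  have agree2: "u t = u' t \<and> w t = w' t"
    if "sol r0 R u w" "u r0 = h0" "w r0 = w0" "sol r0 R' u' w'" "u' r0 = h0" "w' r0 = w0"
      "t \<in> {r0..R}" "t \<le> R'" for R R' u w u' w' t
  proof -
    define m where "m = min R R'"
    have m: "r0 \<le> m" "m \<le> R" "m \<le> R'" "t \<in> {r0..m}" using that by (auto simp: m_def)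
    have "sol r0 m u w" by (rule sol_subset[OF that(1)]) (use m in auto)
    moreover have "sol r0 m u' w'" by (rule sol_subset[OF that(4)]) (use m in auto)
    ultimately have "\<forall>t\<in>{r0..m}. u t = u' t \<and> w t = w' t"
      by (intro GUN) (use that m r0 w0 in auto)
    then show ?thesis using m by blast
  qed
  define G0 where "G0 = \<bar>h0\<bar> powr p / p + \<bar>w0 / rho r0\<bar> powr qq / qq"
  have enb: "en u w t \<le> G0" if "sol r0 R u w" "u r0 = h0" "w r0 = w0" "t \<in> {r0..R}" for R u w t
  proof -
    have "en u w t \<le> en u w r0" by (rule energy_mono[OF that(1) r0]) (use that w0 in auto)
    also have "\<dots> = G0" using that by (simp add: en_def G0_def)
    finally show ?thesis .
  qed
  define Bu where "Bu = max 1 (p * G0)"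
  define Bv where "Bv = max 1 (qq * G0)"
  have bnds: "\<bar>u t\<bar> \<le> Bu \<and> \<bar>w t / rho t\<bar> \<le> Bv"
    if "sol r0 R u w" "u r0 = h0" "w r0 = w0" "t \<in> {r0..R}" for R u w t
    using en_bound[OF enb[OF that]] by (simp add: Bu_def Bv_def)
  define LU where "LU = 1 + Bv"
  define LW where "LW = rho R1 * Bu powr (p - 1)"
  have lipU: "\<bar>u s - u t\<bar> \<le> LU * \<bar>s - t\<bar>" and lipW: "\<bar>w s - w t\<bar> \<le> LW * \<bar>s - t\<bar>"
    if "sol r0 R u w" "u r0 = h0" "w r0 = w0" "s \<in> {r0..R}" "t \<in> {r0..R}" "R \<le> R1" for R u w s t
  proof -
    have der: "\<And>z. z \<in> {r0..R} \<Longrightarrow> (u has_real_derivative pq (w z / rho z)) (at z within {r0..R})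
        \<and> (w has_real_derivative - (rho z * ph (u z))) (at z within {r0..R})"
      using that(1) unfolding sol_def by blast
    show "\<bar>u s - u t\<bar> \<le> LU * \<bar>s - t\<bar>"
    proof -
      have "norm (u s - u t) \<le> LU * norm (s - t)"
      proof (rule field_differentiable_bound[of "{r0..R}" u "\<lambda>z. pq (w z / rho z)"])
        show "norm (pq (w z / rho z)) \<le> LU" if "z \<in> {r0..R}" for z
          using pq_bound[of "w z / rho z"] bnds[OF \<open>sol r0 R u w\<close> \<open>u r0 = h0\<close> \<open>w r0 = w0\<close> that]
          by (simp add: LU_def)
      qed (use der that in auto)
      then show ?thesis by simp
    qed
    show "\<bar>w s - w t\<bar> \<le> LW * \<bar>s - t\<bar>"
    proof -
      have "norm (w s - w t) \<le> LW * norm (s - t)"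
      proof (rule field_differentiable_bound[of "{r0..R}" w "\<lambda>z. - (rho z * ph (u z))"])
        show "norm (- (rho z * ph (u z))) \<le> LW" if z: "z \<in> {r0..R}" for z
        proof -
          have "\<bar>u z\<bar> \<le> Bu" using bnds[OF \<open>sol r0 R u w\<close> \<open>u r0 = h0\<close> \<open>w r0 = w0\<close> z] by simp
          then have "\<bar>ph (u z)\<bar> \<le> Bu powr (p - 1)" by (rule ph_bound)
          moreover have "0 \<le> rho z" "rho z \<le> rho R1" using z r0 \<open>R \<le> R1\<close> by (auto intro: rho_nonneg rho_mono)
          ultimately have "rho z * \<bar>ph (u z)\<bar> \<le> rho R1 * Bu powr (p - 1)"
            by (meson abs_ge_zero mult_mono order_trans)
          then show ?thesis using \<open>0 \<le> rho z\<close> by (simp add: LW_def abs_mult)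
        qed
      qed (use der that in auto)
      then show ?thesis by simp
    qed
  qed
  show False
  proof -
    have PT: "P T"
    proof (cases "T \<in> A")
      case True then show ?thesis by (simp add: A_def)
    next
      case False
      then have ltT: "R < T" if RA: "R \<in> A" for R
      proof -
        have "R \<noteq> T" using RA False by auto
        then show ?thesis using AT[OF RA] by linarith
      qed
      define Rt where "Rt t = (SOME R. R \<in> A \<and> t < R)" for t
      have Rt: "Rt t \<in> A \<and> t < Rt t" if "t < T" for t
        using exA[OF that] unfolding Rt_def by (metis (mono_tags, lifting) someI_ex)
      define U where "U t = fst (sel (Rt t)) t" for t
      define W where "W t = snd (sel (Rt t)) t" for t
      have agree: "U t = u t \<and> W t = w t"
        if "sol r0 R u w" "u r0 = h0" "w r0 = w0" "t \<in> {r0..R}" "t < T" for R u w t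
      proof -
        have R': "Rt t \<in> A" "t < Rt t" using Rt[OF that(5)] by auto
        have "fst (sel (Rt t)) t = u t \<and> snd (sel (Rt t)) t = w t"
          using agree2[of "Rt t" "fst (sel (Rt t))" "snd (sel (Rt t))" R u w t] selP[OF R'(1)] that R'
          by auto
        then show ?thesis by (simp add: U_def W_def)
      qed
      have lipUW: "\<bar>U s - U t\<bar> \<le> LU * \<bar>s - t\<bar> \<and> \<bar>W s - W t\<bar> \<le> LW * \<bar>s - t\<bar>"
        if st: "s \<in> {r0..<T}" "t \<in> {r0..<T}" for s t
      proof -
        obtain R where R: "R \<in> A" "max s t < R" using exA[of "max s t"] st by auto
        have RR1: "R \<le> R1" using ltR1[OF R(1)] by simp
        note sR = selP[OF R(1)]
        have "U s = fst (sel R) s \<and> W s = snd (sel R) s" using agree[of R _ _ s] sR that R by auto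
        moreover have "U t = fst (sel R) t \<and> W t = snd (sel R) t" using agree[of R _ _ t] sR that R by auto
        moreover have "\<bar>fst (sel R) s - fst (sel R) t\<bar> \<le> LU * \<bar>s - t\<bar>"
          using lipU[of R "fst (sel R)" "snd (sel R)" s t] sR that R RR1 by auto
        moreover have "\<bar>snd (sel R) s - snd (sel R) t\<bar> \<le> LW * \<bar>s - t\<bar>"
          using lipW[of R "fst (sel R)" "snd (sel R)" s t] sR that R RR1 by auto
        ultimately show ?thesis by simp
      qed
      have LU0: "0 \<le> LU" by (simp add: LU_def Bv_def)
      have LW0: "0 \<le> LW" using rho_nonneg[of R1] by (simp add: LW_def)
      have "LU-lipschitz_on {r0..<T} U"
        using lipUW LU0 by (intro lipschitz_onI) (auto simp: dist_real_def)
      then have "uniformly_continuous_on {r0..<T} U" by (rule lipschitz_on_uniformly_continuous)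
      then obtain gU where gU: "uniformly_continuous_on (closure {r0..<T}) gU" "\<And>x. x \<in> {r0..<T} \<Longrightarrow> U x = gU x"
        by (rule uniformly_continuous_on_extension_on_closure) blast
      have "LW-lipschitz_on {r0..<T} W"
        using lipUW LW0 by (intro lipschitz_onI) (auto simp: dist_real_def)
      then have "uniformly_continuous_on {r0..<T} W" by (rule lipschitz_on_uniformly_continuous)
      then obtain gW where gW: "uniformly_continuous_on (closure {r0..<T}) gW" "\<And>x. x \<in> {r0..<T} \<Longrightarrow> W x = gW x"
        by (rule uniformly_continuous_on_extension_on_closure) blast
      have clT: "closure {r0..<T} = {r0..T}" using r0T by simp
      have cgU: "continuous_on {r0..T} gU" using gU(1) unfolding clT by (rule uniformly_continuous_imp_continuous)
      have cgW: "continuous_on {r0..T} gW" using gW(1) unfolding clT by (rule uniformly_continuous_imp_continuous)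
      have sel_eq: "gU t = fst (sel R) t \<and> gW t = snd (sel R) t" if "R \<in> A" "t \<in> {r0..R}" for R t
      proof -
        have tT: "t < T" using ltT[OF that(1)] that(2) by simp
        have "U t = fst (sel R) t \<and> W t = snd (sel R) t" using agree[of R _ _ t] selP[OF that(1)] that tT by auto
        moreover have "t \<in> {r0..<T}" using that tT by auto
        ultimately show ?thesis using gU(2) gW(2) by metis
      qed
      obtain Rm where Rm: "Rm \<in> A" "r0 < Rm" using exA[OF r0T] by blast
      have RmT: "Rm < T" by (rule ltT[OF Rm(1)])
      note sRm = selP[OF Rm(1)]
      have cp: "continuous_on {r0..T} (\<lambda>s. pq (gW s / rho s))"
      proof -
        have c1: "continuous_on {r0..Rm} (\<lambda>s. pq (gW s / rho s))"
        proof -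
          have "continuous_on {r0..Rm} (\<lambda>s. pq (snd (sel Rm) s / rho s))"
            by (rule sol_pqcont) (use sRm r0 Rm w0 in auto)
          moreover have "pq (snd (sel Rm) x / rho x) = pq (gW x / rho x)" if x: "x \<in> {r0..Rm}" for x
          proof -
            have "gW x = snd (sel Rm) x" using sel_eq[OF Rm(1) x] by blast
            then show ?thesis by simp
          qed
          ultimately show ?thesis by (rule continuous_on_eq)
        qed
        have c2: "continuous_on {Rm..T} (\<lambda>s. pq (gW s / rho s))"
        proof -
          have "continuous_on {Rm..T} gW" by (rule continuous_on_subset[OF cgW]) (use Rm in auto)
          moreover have "continuous_on {Rm..T} rho" by (rule rho_cont_sub) (use Rm r0 in auto)
          moreover have "\<forall>s\<in>{Rm..T}. rho s \<noteq> 0"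
          proof
            fix s assume "s \<in> {Rm..T}"
            then have "0 < s" using Rm r0 by simp
            then show "rho s \<noteq> 0" using rho_pos[of s] by simp
          qed
          ultimately have "continuous_on {Rm..T} (\<lambda>s. gW s / rho s)" by (intro continuous_on_divide)
          then show ?thesis by (rule cont_pq_comp)
        qed
        have "continuous_on ({r0..Rm} \<union> {Rm..T}) (\<lambda>s. pq (gW s / rho s))"
          by (rule continuous_on_closed_Un[OF _ _ c1 c2]) auto
        moreover have "{r0..Rm} \<union> {Rm..T} = {r0..T}" using Rm RmT by auto
        ultimately show ?thesis by simp
      qed
      have cr: "continuous_on {r0..T} (\<lambda>s. rho s * ph (gU s))"
        by (intro continuous_on_mult rho_cont_sub[OF r0] cont_ph_comp cgU)
      have gU0: "gU r0 = h0" and gW0: "gW r0 = w0"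
      proof -
        have "r0 \<in> {r0..Rm}" using Rm by simp
        then have "gU r0 = fst (sel Rm) r0 \<and> gW r0 = snd (sel Rm) r0" by (rule sel_eq[OF Rm(1)])
        then show "gU r0 = h0" "gW r0 = w0" using sRm by auto
      qed
      have inteq: "gU t = gU r0 + integral {r0..t} (\<lambda>s. pq (gW s / rho s)) \<and>
                   gW t = gW r0 - integral {r0..t} (\<lambda>s. rho s * ph (gU s))"
        if t: "t \<in> {r0..<T}" for t
      proof -
        obtain R where R: "R \<in> A" "t < R" using exA[of t] t by auto
        note sR = selP[OF R(1)]
        have r0R: "r0 \<le> R" using t R by simp
        have I: "intsol r0 R (fst (sel R)) (snd (sel R))"
          by (rule D2I[OF conjunct1[OF sR] r0 r0R]) (use sR w0 in simp)
        have tR: "t \<in> {r0..R}" using t R by auto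
        have e1: "fst (sel R) t = fst (sel R) r0 + integral {r0..t} (\<lambda>s. pq (snd (sel R) s / rho s))"
          using I tR unfolding intsol_def by blast
        have e2: "snd (sel R) t = snd (sel R) r0 - integral {r0..t} (\<lambda>s. rho s * ph (fst (sel R) s))"
          using I tR unfolding intsol_def by blast
        have se: "gU s = fst (sel R) s \<and> gW s = snd (sel R) s" if "s \<in> {r0..t}" for s
        proof -
          have "s \<in> {r0..R}" using that tR by simp
          then show ?thesis by (rule sel_eq[OF R(1)])
        qed
        have c1: "integral {r0..t} (\<lambda>s. pq (gW s / rho s)) = integral {r0..t} (\<lambda>s. pq (snd (sel R) s / rho s))"
        proof (rule integral_cong)
          fix s assume "s \<in> {r0..t}"
          then show "pq (gW s / rho s) = pq (snd (sel R) s / rho s)" using se by simp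
        qed
        have c2: "integral {r0..t} (\<lambda>s. rho s * ph (gU s)) = integral {r0..t} (\<lambda>s. rho s * ph (fst (sel R) s))"
        proof (rule integral_cong)
          fix s assume "s \<in> {r0..t}"
          then show "rho s * ph (gU s) = rho s * ph (fst (sel R) s)" using se by simp
        qed
        have "t \<in> {r0..t}" "r0 \<in> {r0..t}" using t by auto
        then have "gU t = fst (sel R) t" "gW t = snd (sel R) t" "gU r0 = fst (sel R) r0" "gW r0 = snd (sel R) r0"
          using se by blast+
        then show ?thesis using e1 e2 c1 c2 by simp
      qed
      have inteqT: "gU T = gU r0 + integral {r0..T} (\<lambda>s. pq (gW s / rho s)) \<and>
                    gW T = gW r0 - integral {r0..T} (\<lambda>s. rho s * ph (gU s))"
      proof
        have ci1: "continuous_on {r0..T} (\<lambda>t. gU r0 + integral {r0..t} (\<lambda>s. pq (gW s / rho s)))"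
          by (intro continuous_on_add continuous_on_const indefinite_integral_continuous_1
              integrable_continuous_interval cp)
        show "gU T = gU r0 + integral {r0..T} (\<lambda>s. pq (gW s / rho s))"
          using cont_agree_end[OF r0T cgU ci1] inteq by blast
        have ci2: "continuous_on {r0..T} (\<lambda>t. gW r0 - integral {r0..t} (\<lambda>s. rho s * ph (gU s)))"
          by (intro continuous_on_diff continuous_on_const indefinite_integral_continuous_1
              integrable_continuous_interval cr)
        show "gW T = gW r0 - integral {r0..T} (\<lambda>s. rho s * ph (gU s))"
          using cont_agree_end[OF r0T cgW ci2] inteq by blast
      qed
      have "intsol r0 T gU gW"
        unfolding intsol_def
      proof (intro conjI ballI)
        show "continuous_on {r0..T} gU" by (rule cgU)
        show "continuous_on {r0..T} (\<lambda>s. pq (gW s / rho s))" by (rule cp)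
        fix t assume t: "t \<in> {r0..T}"
        have "(gU t = gU r0 + integral {r0..t} (\<lambda>s. pq (gW s / rho s))) \<and>
              (gW t = gW r0 - integral {r0..t} (\<lambda>s. rho s * ph (gU s)))"
        proof (cases "t = T")
          case True then show ?thesis using inteqT by simp
        next
          case False then have "t \<in> {r0..<T}" using t by simp
          then show ?thesis by (rule inteq)
        qed
        then show "gU t = gU r0 + integral {r0..t} (\<lambda>s. pq (gW s / rho s))"
          "gW t = gW r0 - integral {r0..t} (\<lambda>s. rho s * ph (gU s))" by blast+
      qed
      then have "sol r0 T gU gW" by (rule I2D[OF _ r0])
      then show ?thesis using gU0 gW0 r0T by (auto simp: P_def)
    qed
    then obtain u w where uw: "sol r0 T u w" "u r0 = h0" "w r0 = w0" by (auto simp: P_def)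
    obtain e u' w' where "e > 0" "sol r0 (T + e) u' w'" "u' r0 = u r0" "w' r0 = w r0"
      using sol_intsol_data[OF r0 _ uw(1)] r0T uw w0 by fastforce
    then have "T + e \<in> A" using uw r0T by (auto simp: A_def P_def)
    then have "T + e \<le> T" by (rule AT)
    then show False using \<open>e > 0\<close> by simp
  qed
qed

end

lemma at_within_Icc_ray:
  fixes x R r0 :: real
  assumes "x < R"
  shows "at x within {r0..R} = at x within {r0..}"
  by (rule at_within_nhd[of x "{..<R}"]) (use assms in auto)

context hl begin

lemma uniqueness:
  assumes r0: "0 \<le> r0" and h: "r0 = 0 \<longrightarrow> h0' = 0"
    and S1: "is_solution p \<theta> r0 h0 h0' \<phi>" and S2: "is_solution p \<theta> r0 h0 h0' \<psi>"
    and r: "r0 \<le> r"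
  shows "\<phi> r = \<psi> r"
proof -
  have toSol: "sol r0 r f (\<lambda>t. rho t * ph (f' t)) \<and> f r0 = h0 \<and> (\<lambda>t. rho t * ph (f' t)) r0 = rho r0 * ph h0'"
    if C1: "C1_with_deriv {r0..} f f'" and C2: "C1_with_deriv {r0..} (\<lambda>t. rho t * ph (f' t)) g'"
      and E: "\<forall>t\<ge>r0. g' t + rho t * ph (f t) = 0" and I: "f r0 = h0" "f' r0 = h0'" for f f' g'
  proof -
    have sub: "{r0..r} \<subseteq> {r0..}" by auto
    have "sol r0 r f (\<lambda>t. rho t * ph (f' t))"
      unfolding sol_def
    proof (intro ballI conjI)
      fix t assume t: "t \<in> {r0..r}"
      have tt: "t \<in> {r0..}" using t by simp
      have d1: "(f has_real_derivative f' t) (at t within {r0..r})"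
        using C1 tt unfolding C1_with_deriv_def by (blast intro: DERIV_subset[OF _ sub])
      have "f' t = pq ((rho t * ph (f' t)) / rho t)"
      proof (cases "rho t = 0")
        case False then show ?thesis by simp
      next
        case True
        then have "t = 0" "1 < \<theta>" using rho_zero[of t] t r0 by auto
        then have "t = r0" using t r0 by auto
        then have "f' t = 0" using I h \<open>t = 0\<close> by simp
        then show ?thesis by simp
      qed
      then show "(f has_real_derivative pq ((rho t * ph (f' t)) / rho t)) (at t within {r0..r})"
        using d1 by simp
      have "((\<lambda>t. rho t * ph (f' t)) has_real_derivative g' t) (at t within {r0..r})"
        using C2 tt unfolding C1_with_deriv_def by (blast intro: DERIV_subset[OF _ sub])
      moreover have "g' t = - (rho t * ph (f t))" using E tt by (auto simp: algebra_simps eq_neg_iff_add_eq_0)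
      ultimately show "((\<lambda>t. rho t * ph (f' t)) has_real_derivative - (rho t * ph (f t))) (at t within {r0..r})"
        by simp
    qed
    then show ?thesis using I by simp
  qed
  obtain f1' g1' where A1: "C1_with_deriv {r0..} \<phi> f1'" "C1_with_deriv {r0..} (\<lambda>t. rho t * ph (f1' t)) g1'"
    "\<forall>t\<ge>r0. g1' t + rho t * ph (\<phi> t) = 0" "\<phi> r0 = h0" "f1' r0 = h0'"
    using S1 unfolding is_solution_def by blast
  obtain f2' g2' where A2: "C1_with_deriv {r0..} \<psi> f2'" "C1_with_deriv {r0..} (\<lambda>t. rho t * ph (f2' t)) g2'"
    "\<forall>t\<ge>r0. g2' t + rho t * ph (\<psi> t) = 0" "\<psi> r0 = h0" "f2' r0 = h0'"
    using S2 unfolding is_solution_def by blast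
  note T1 = toSol[OF A1] and T2 = toSol[OF A2]
  have "\<forall>t\<in>{r0..r}. \<phi> t = \<psi> t \<and> rho t * ph (f1' t) = rho t * ph (f2' t)"
    by (rule GUN[OF conjunct1[OF T1] conjunct1[OF T2] r0 r]) (use A1 A2 in simp_all)
  then show ?thesis using r by simp
qed

lemma existence:
  assumes r0: "0 \<le> r0" and h: "r0 = 0 \<longrightarrow> h0' = 0"
  shows "\<exists>\<phi>. is_solution p \<theta> r0 h0 h0' \<phi>"
proof -
  define w0 where "w0 = rho r0 * ph h0'"
  have w0z: "rho r0 = 0 \<Longrightarrow> w0 = 0" by (simp add: w0_def)
  have ex: "\<forall>R\<ge>r0. \<exists>u w. sol r0 R u w \<and> u r0 = h0 \<and> w r0 = w0" by (rule GEX[OF r0 w0z])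
  define sel where "sel R = (SOME uw. sol r0 R (fst uw) (snd uw) \<and> fst uw r0 = h0 \<and> snd uw r0 = w0)" for R
  have selP: "sol r0 R (fst (sel R)) (snd (sel R)) \<and> fst (sel R) r0 = h0 \<and> snd (sel R) r0 = w0"
    if R: "r0 \<le> R" for R
  proof -
    obtain u w where "sol r0 R u w" "u r0 = h0" "w r0 = w0" using ex R by blast
    then have "\<exists>uw. sol r0 R (fst uw) (snd uw) \<and> fst uw r0 = h0 \<and> snd uw r0 = w0"
      by (intro exI[of _ "(u, w)"]) simp
    then show ?thesis unfolding sel_def by (rule someI_ex)
  qed
  define U where "U t = fst (sel (t + 1)) t" for t
  define W where "W t = snd (sel (t + 1)) t" for t
  have agree: "U t = fst (sel R) t \<and> W t = snd (sel R) t" if R: "r0 \<le> R" and t: "t \<in> {r0..R}" for R t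
  proof -
    define m where "m = min R (t + 1)"
    have m: "r0 \<le> m" "m \<le> R" "m \<le> t + 1" "t \<in> {r0..m}" using R t by (auto simp: m_def)
    have s1: "sol r0 m (fst (sel (t + 1))) (snd (sel (t + 1)))"
      by (rule sol_subset[OF conjunct1[OF selP]]) (use t m in auto)
    have s2: "sol r0 m (fst (sel R)) (snd (sel R))"
      by (rule sol_subset[OF conjunct1[OF selP[OF R]]]) (use m in auto)
    have d1: "fst (sel (t + 1)) r0 = h0" "snd (sel (t + 1)) r0 = w0" using selP[of "t + 1"] t by auto
    have d2: "fst (sel R) r0 = h0" "snd (sel R) r0 = w0" using selP[OF R] by auto
    have "\<forall>s\<in>{r0..m}. fst (sel (t + 1)) s = fst (sel R) s \<and> snd (sel (t + 1)) s = snd (sel R) s"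
      by (rule GUN[OF s1 s2 r0 m(1)]) (use d1 d2 w0z in simp_all)
    then show ?thesis using m(4) by (simp add: U_def W_def)
  qed
  have solR: "sol r0 (x + 1) (fst (sel (x + 1))) (snd (sel (x + 1)))" if "x \<in> {r0..}" for x
    using selP[of "x + 1"] that by auto
  have near: "U y = fst (sel (x + 1)) y \<and> W y = snd (sel (x + 1)) y"
    if "x \<in> {r0..}" "y \<in> {r0..}" "dist y x < 1" for x y
    using agree[of "x + 1" y] that by (auto simp: dist_real_def)
  have atx: "at x within {r0..x + 1} = at x within {r0..}" for x :: real
    by (rule at_within_Icc_ray) simp
  have dU: "(U has_real_derivative pq (W x / rho x)) (at x within {r0..})" if x: "x \<in> {r0..}" for x
  proof -
    have xx: "x \<in> {r0..x + 1}" using x by simp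
    have "(fst (sel (x + 1)) has_real_derivative pq (snd (sel (x + 1)) x / rho x)) (at x within {r0..x + 1})"
      using solR[OF x] xx unfolding sol_def by blast
    then have "(fst (sel (x + 1)) has_real_derivative pq (snd (sel (x + 1)) x / rho x)) (at x within {r0..})"
      by (simp add: atx)
    then have "(U has_real_derivative pq (snd (sel (x + 1)) x / rho x)) (at x within {r0..})"
      by (rule has_field_derivative_transform_within[OF _ zero_less_one x]) (use near[OF x] in auto)
    moreover have "W x = snd (sel (x + 1)) x" using near[OF x x] by simp
    ultimately show ?thesis by simp
  qed
  have dW: "(W has_real_derivative - (rho x * ph (U x))) (at x within {r0..})" if x: "x \<in> {r0..}" for x
  proof -
    have xx: "x \<in> {r0..x + 1}" using x by simp
    have "(snd (sel (x + 1)) has_real_derivative - (rho x * ph (fst (sel (x + 1)) x))) (at x within {r0..x + 1})"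
      using solR[OF x] xx unfolding sol_def by blast
    then have "(snd (sel (x + 1)) has_real_derivative - (rho x * ph (fst (sel (x + 1)) x))) (at x within {r0..})"
      by (simp add: atx)
    then have "(W has_real_derivative - (rho x * ph (fst (sel (x + 1)) x))) (at x within {r0..})"
      by (rule has_field_derivative_transform_within[OF _ zero_less_one x]) (use near[OF x] in auto)
    moreover have "U x = fst (sel (x + 1)) x" using near[OF x x] by simp
    ultimately show ?thesis by simp
  qed
  have cU: "continuous_on {r0..} U" using dU by (rule DERIV_continuous_on)
  have cp: "continuous_on {r0..} (\<lambda>r. pq (W r / rho r))"
    unfolding continuous_on_eq_continuous_within
  proof
    fix x assume x: "x \<in> {r0..}"
    have xx: "x \<in> {r0..x + 1}" using x by simp
    have "continuous_on {r0..x + 1} (\<lambda>r. pq (snd (sel (x + 1)) r / rho r))"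
      by (rule sol_pqcont[OF solR[OF x] r0]) (use x selP[of "x + 1"] w0z in auto)
    then have "continuous (at x within {r0..x + 1}) (\<lambda>r. pq (snd (sel (x + 1)) r / rho r))"
      using xx by (simp add: continuous_on_eq_continuous_within)
    then have "continuous (at x within {r0..}) (\<lambda>r. pq (snd (sel (x + 1)) r / rho r))"
      by (simp add: atx)
    then show "continuous (at x within {r0..}) (\<lambda>r. pq (W r / rho r))"
      by (rule continuous_transform_within[OF _ zero_less_one x]) (use near[OF x] in auto)
  qed
  have geq: "rho r * ph (pq (W r / rho r)) = W r" if r: "r \<in> {r0..}" for r
  proof (cases "rho r = 0")
    case False then show ?thesis by simp
  next
    case True
    then have "r = 0" using rho_zero[of r] r r0 by auto
    then have "r = r0" using r r0 by auto
    then have "W r = w0" using agree[of r0 r0] r0 selP[of r0] by (simp add: U_def W_def)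
    then show ?thesis using True w0z \<open>r = r0\<close> by simp
  qed
  have U0: "U r0 = h0" using agree[of r0 r0] selP[of r0] by simp
  have W0: "W r0 = w0" using agree[of r0 r0] selP[of r0] by simp
  have P0: "pq (W r0 / rho r0) = h0'"
  proof (cases "rho r0 = 0")
    case False then show ?thesis by (simp add: W0 w0_def)
  next
    case True
    then have "r0 = 0" using rho_zero[of r0] r0 by auto
    then show ?thesis using h W0 w0z True by simp
  qed
  have "is_solution p \<theta> r0 h0 h0' U"
    unfolding is_solution_def
  proof (intro exI conjI)
    show "C1_with_deriv {r0..} U (\<lambda>r. pq (W r / rho r))"
      unfolding C1_with_deriv_def using dU cp by blast
    show "C1_with_deriv {r0..} (\<lambda>r. rho r * ph (pq (W r / rho r))) (\<lambda>r. - (rho r * ph (U r)))"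
      unfolding C1_with_deriv_def
    proof
      show "\<forall>x\<in>{r0..}. ((\<lambda>r. rho r * ph (pq (W r / rho r))) has_real_derivative - (rho x * ph (U x))) (at x within {r0..})"
      proof
        fix x assume x: "x \<in> {r0..}"
        show "((\<lambda>r. rho r * ph (pq (W r / rho r))) has_real_derivative - (rho x * ph (U x))) (at x within {r0..})"
          by (rule DERIV_transform_on[OF x geq dW[OF x]])
      qed
      show "continuous_on {r0..} (\<lambda>r. - (rho r * ph (U r)))"
        by (intro continuous_on_minus continuous_on_mult continuous_on_subset[OF rho_cont] cont_ph_comp cU)
          (use r0 in auto)
    qed
    show "\<forall>r\<ge>r0. - (rho r * ph (U r)) + rho r * ph (U r) = 0" by simp
    show "U r0 = h0" by (rule U0)
    show "pq (W r0 / rho r0) = h0'" by (rule P0)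
  qed
  then show ?thesis by blast
qed

end

theorem mainTheorem16:
  fixes p \<theta> r0 h0 h0' :: real
  assumes "p \<ge> 2" and "\<theta> \<ge> 1" and "r0 \<ge> 0"
    and "r0 = 0 \<longrightarrow> h0' = 0"
  shows "(\<exists>\<phi>. is_solution p \<theta> r0 h0 h0' \<phi>) \<and>
         (\<forall>\<phi> \<psi>. is_solution p \<theta> r0 h0 h0' \<phi> \<longrightarrow> is_solution p \<theta> r0 h0 h0' \<psi> \<longrightarrow>
             (\<forall>r\<ge>r0. \<phi> r = \<psi> r))"
proof -
  have H: "hl p \<theta>" using assms(1,2) by (simp add: hl_def)
  have E: "\<exists>\<phi>. is_solution p \<theta> r0 h0 h0' \<phi>" by (rule hl.existence[OF H assms(3,4)])
  have U: "\<forall>\<phi> \<psi>. is_solution p \<theta> r0 h0 h0' \<phi> \<longrightarrow> is_solution p \<theta> r0 h0 h0' \<psi> \<longrightarrow>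
             (\<forall>r\<ge>r0. \<phi> r = \<psi> r)"
    using hl.uniqueness[OF H assms(3,4)] by blast
  show ?thesis using E U by blast
qed

end
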